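(* Let $n\geq 6$ be an integer, $K$ a field, $R=K[x_1,\dots,x_n]$, and let $I_n$ be the ideal of $R$ generated by the monomials $x_1x_3,\dots,x_1x_{n-1}$; $x_2x_4,\dots,x_2x_n$; $x_3x_5,\dots,x_3x_n$; $x_4x_n,\dots,x_{n-2}x_n$. Let $B=(b_{ij})_{i,j=1,\dots,n-3}$ be the matrix defined by: $b_{jj}=x_1$ for $j=1,\dots,n-4$ and $b_{n-3,n-3}=x_3$; $b_{j+1,j}=x_2$ for $j=1,\dots,n-4$; $b_{ij}=0$ if $i\geq j+2$; $b_{j-1,j}=x_3x_{3+j}$ for $j=2,\dots,n-4$; $b_{1,n-3}=x_2$ and $b_{i,n-3}=x_{2+i}$ for $i=2,\dots,n-4$; $b_{ij}=0$ if $j\geq i+2$ and $j\neq n-3$. Let $D=\det B-(-1)^n x_2^{n-3}$ and, for $i=1,\dots,n-3$, let $q_i=\sum_{j=1}^{n-3} b_{ij}x_{3+j}$. Then $$I_n=\sqrt{(D,q_1,\dots,q_{n-3})}.$$ *)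

theory Defs
  imports "HOL-Library.Poly_Mapping" "Jordan_Normal_Form.Determinant"
begin

text \<open>Multivariate polynomials over a coefficient ring 'a in the variables x_0, x_1, x_2, ...
  (variables indexed by nat): a monomial is an exponent vector a finitely supported map from nat to nat,
  a polynomial a finitely supported map from monomials to coefficients.\<close>

type_synonym 'a mpoly = "(nat \<Rightarrow>\<^sub>0 nat) \<Rightarrow>\<^sub>0 'a"

definition Var :: "nat \<Rightarrow> 'a::comm_ring_1 mpoly" where
  "Var i = Poly_Mapping.single (Poly_Mapping.single i 1) 1"

definition poly_vars :: "'a::zero mpoly \<Rightarrow> nat set" where
  "poly_vars p = \<Union> (Poly_Mapping.keys ` Poly_Mapping.keys p)"

definition polyring :: "nat \<Rightarrow> 'a::comm_ring_1 mpoly set" where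
  "polyring n = {p. poly_vars p \<subseteq> {1..n}}"

definition ideal_gen :: "'a::comm_ring_1 set \<Rightarrow> 'a set \<Rightarrow> 'a set" where
  "ideal_gen R S = {p. \<exists>F r. finite F \<and> F \<subseteq> S \<and> (\<forall>s\<in>F. r s \<in> R) \<and> p = (\<Sum>s\<in>F. r s * s)}"

definition radical_in :: "'a::comm_ring_1 set \<Rightarrow> 'a set \<Rightarrow> 'a set" where
  "radical_in R J = {f \<in> R. \<exists>k::nat. f ^ k \<in> J}"

definition In_gens :: "nat \<Rightarrow> 'a::comm_ring_1 mpoly set" where
  "In_gens n =
     {Var 1 * Var j | j. 3 \<le> j \<and> j \<le> n - 1} \<union>
     {Var 2 * Var j | j. 4 \<le> j \<and> j \<le> n} \<union>
     {Var 3 * Var j | j. 5 \<le> j \<and> j \<le> n} \<union>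
     {Var i * Var n | i. 4 \<le> i \<and> i \<le> n - 2}"

definition bentry :: "nat \<Rightarrow> nat \<Rightarrow> nat \<Rightarrow> 'a::comm_ring_1 mpoly" where
  "bentry n i j =
    (if i = j \<and> 1 \<le> j \<and> j \<le> n - 4 then Var 1
     else if i = n - 3 \<and> j = n - 3 then Var 3
     else if i = j + 1 \<and> 1 \<le> j \<and> j \<le> n - 4 then Var 2
     else if i \<ge> j + 2 then 0
     else if i + 1 = j \<and> 2 \<le> j \<and> j \<le> n - 4 then Var 3 * Var (3 + j)
     else if j = n - 3 \<and> i = 1 then Var 2
     else if j = n - 3 \<and> 2 \<le> i \<and> i \<le> n - 4 then Var (2 + i)
     else 0)"

text \<open>The (n-3)x(n-3) matrix B (Jordan_Normal_Form matrices are 0-indexed).\<close>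
definition Bmat :: "nat \<Rightarrow> 'a::comm_ring_1 mpoly mat" where
  "Bmat n = mat (n - 3) (n - 3) (\<lambda>(i, j). bentry n (i + 1) (j + 1))"

definition Dpoly :: "nat \<Rightarrow> 'a::comm_ring_1 mpoly" where
  "Dpoly n = det (Bmat n) - (-1) ^ n * Var 2 ^ (n - 3)"

definition qpoly :: "nat \<Rightarrow> nat \<Rightarrow> 'a::comm_ring_1 mpoly" where
  "qpoly n i = (\<Sum>j = 1..n - 3. bentry n i j * Var (3 + j))"

end

theory Submission
  imports Defs
begin


lemma in_polyring_iff: "p \<in> polyring n \<longleftrightarrow> (\<forall>m\<in>Poly_Mapping.keys p. Poly_Mapping.keys m \<subseteq> {1..n})"
  unfolding polyring_def poly_vars_def by auto

lemma keys_add_nat: "Poly_Mapping.keys (a + b :: 'x \<Rightarrow>\<^sub>0 nat) = Poly_Mapping.keys a \<union> Poly_Mapping.keys b"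
  by (auto simp: in_keys_iff lookup_add)

lemma polyring_zero[simp]: "0 \<in> polyring n"
  by (simp add: in_polyring_iff)

lemma polyring_one[simp]: "1 \<in> polyring n"
  by (simp add: in_polyring_iff)

lemma polyring_add[simp]: "p \<in> polyring n \<Longrightarrow> q \<in> polyring n \<Longrightarrow> p + q \<in> polyring n"
  unfolding in_polyring_iff using keys_add[of p q] by blast

lemma polyring_uminus[simp]: "p \<in> polyring n \<Longrightarrow> - p \<in> polyring n"
  unfolding in_polyring_iff by (simp add: in_keys_iff lookup_uminus)

lemma polyring_minus[simp]: "p \<in> polyring n \<Longrightarrow> q \<in> polyring n \<Longrightarrow> p - q \<in> polyring n"
  by (metis polyring_add polyring_uminus diff_conv_add_uminus)

lemma polyring_mult[simp]:
  assumes "p \<in> polyring n" "q \<in> polyring n" shows "p * q \<in> polyring n"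
proof -
  have pq: "\<forall>m\<in>Poly_Mapping.keys p. Poly_Mapping.keys m \<subseteq> {1..n}" "\<forall>m\<in>Poly_Mapping.keys q. Poly_Mapping.keys m \<subseteq> {1..n}"
    using assms by (simp_all add: in_polyring_iff)
  have "Poly_Mapping.keys m \<subseteq> {1..n}" if m: "m \<in> Poly_Mapping.keys (p * q)" for m
  proof -
    have "m \<in> {a + b | a b. a \<in> Poly_Mapping.keys p \<and> b \<in> Poly_Mapping.keys q}"
      using keys_mult[of p q] m by blast
    then obtain a b where "a \<in> Poly_Mapping.keys p" "b \<in> Poly_Mapping.keys q" "m = a + b"
      by blast
    then show ?thesis using pq keys_add_nat[of a b] by auto
  qed
  then show ?thesis by (simp add: in_polyring_iff)
qed

lemma polyring_power[simp]: "p \<in> polyring n \<Longrightarrow> p ^ k \<in> polyring n"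
  by (induction k) auto

lemma polyring_sum[simp]: "(\<And>x. x \<in> A \<Longrightarrow> f x \<in> polyring n) \<Longrightarrow> sum f A \<in> polyring n"
  by (induction A rule: infinite_finite_induct) auto

lemma polyring_prod[simp]: "(\<And>x. x \<in> A \<Longrightarrow> f x \<in> polyring n) \<Longrightarrow> prod f A \<in> polyring n"
  by (induction A rule: infinite_finite_induct) auto

lemma polyring_of_nat[simp]: "of_nat c \<in> polyring n"
  by (induction c) auto

lemma polyring_of_int[simp]: "of_int c \<in> polyring n"
  by (cases c) auto

lemma polyring_Var[simp]: "1 \<le> k \<Longrightarrow> k \<le> n \<Longrightarrow> Var k \<in> polyring n"
  unfolding in_polyring_iff Var_def by simp

lemma Var_nonzero[simp]: "Var k \<noteq> 0"
  unfolding Var_def by (metis lookup_single_eq lookup_zero one_neq_zero)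

lemma ideal_gen_zero[simp]: "0 \<in> ideal_gen R S"
  unfolding ideal_gen_def by (rule CollectI, rule exI[of _ "{}"]) auto

lemma ideal_gen_add:
  assumes "p \<in> ideal_gen R S" "q \<in> ideal_gen R S" "0 \<in> R" "\<And>x y. x \<in> R \<Longrightarrow> y \<in> R \<Longrightarrow> x + y \<in> R"
  shows "p + q \<in> ideal_gen R S"
proof -
  from assms(1) obtain F r where F: "finite F" "F \<subseteq> S" "\<forall>s\<in>F. r s \<in> R" "p = (\<Sum>s\<in>F. r s * s)"
    unfolding ideal_gen_def by auto
  from assms(2) obtain F' r' where F': "finite F'" "F' \<subseteq> S" "\<forall>s\<in>F'. r' s \<in> R" "q = (\<Sum>s\<in>F'. r' s * s)"
    unfolding ideal_gen_def by auto
  define t where "t s = (if s \<in> F then r s else 0) + (if s \<in> F' then r' s else 0)" for s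
  have "(\<Sum>s\<in>F \<union> F'. t s * s) = (\<Sum>s\<in>F \<union> F'. (if s \<in> F then r s * s else 0)) + (\<Sum>s\<in>F \<union> F'. (if s \<in> F' then r' s * s else 0))"
    unfolding sum.distrib[symmetric] by (rule sum.cong) (auto simp: t_def distrib_right)
  also have "\<dots> = p + q"
    using F F' by (simp add: sum.If_cases Int_absorb1 Int_absorb2)
  finally have "p + q = (\<Sum>s\<in>F \<union> F'. t s * s)" by simp
  moreover have "\<forall>s\<in>F \<union> F'. t s \<in> R" unfolding t_def using F F' assms(3) by (auto intro!: assms(4))
  ultimately show ?thesis unfolding ideal_gen_def
    apply (intro CollectI exI[of _ "F \<union> F'"] exI[of _ t])
    using F F' by simp
qed

lemma ideal_gen_mult:
  assumes "p \<in> ideal_gen R S" "c \<in> R" "\<And>x y. x \<in> R \<Longrightarrow> y \<in> R \<Longrightarrow> x * y \<in> R"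
  shows "c * p \<in> ideal_gen R S"
proof -
  from assms(1) obtain F r where F: "finite F" "F \<subseteq> S" "\<forall>s\<in>F. r s \<in> R" "p = (\<Sum>s\<in>F. r s * s)"
    unfolding ideal_gen_def by auto
  have "c * p = (\<Sum>s\<in>F. (c * r s) * s)" using F by (simp add: sum_distrib_left mult.assoc)
  moreover have "\<forall>s\<in>F. c * r s \<in> R" using F assms by auto
  ultimately show ?thesis unfolding ideal_gen_def
    apply (intro CollectI exI[of _ F] exI[of _ "\<lambda>s. c * r s"])
    using F by simp
qed

lemma ideal_gen_gen: "s \<in> S \<Longrightarrow> 1 \<in> R \<Longrightarrow> s \<in> ideal_gen R S"
  unfolding ideal_gen_def by (rule CollectI, rule exI[of _ "{s}"], rule exI[of _ "\<lambda>_. 1"]) auto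

lemma ideal_gen_mono: "S \<subseteq> T \<Longrightarrow> ideal_gen R S \<subseteq> ideal_gen R T"
  unfolding ideal_gen_def by blast

abbreviation PI where "PI n S \<equiv> ideal_gen (polyring n) S"

lemma PI_add[simp]: "p \<in> PI n S \<Longrightarrow> q \<in> PI n S \<Longrightarrow> p + q \<in> PI n S"
  by (rule ideal_gen_add) auto

lemma PI_mult[simp]: "p \<in> PI n S \<Longrightarrow> c \<in> polyring n \<Longrightarrow> c * p \<in> PI n S"
  by (rule ideal_gen_mult) auto

lemma PI_mult'[simp]: "p \<in> PI n S \<Longrightarrow> c \<in> polyring n \<Longrightarrow> p * c \<in> PI n S"
  using PI_mult by (metis mult.commute)

lemma PI_uminus[simp]: "p \<in> PI n S \<Longrightarrow> - p \<in> PI n S"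
  using PI_mult[of p n S "-1"] by simp

lemma PI_minus[simp]: "p \<in> PI n S \<Longrightarrow> q \<in> PI n S \<Longrightarrow> p - q \<in> PI n S"
  by (metis PI_add PI_uminus diff_conv_add_uminus)

lemma PI_gen: "s \<in> S \<Longrightarrow> s \<in> PI n S"
  by (rule ideal_gen_gen) auto

lemma PI_sum: "(\<And>x. x \<in> A \<Longrightarrow> f x \<in> PI n S) \<Longrightarrow> sum f A \<in> PI n S"
proof (induction A rule: infinite_finite_induct)
  case (insert x F)
  then show ?case by (simp add: PI_add)
qed auto

lemma PI_subset: "S \<subseteq> polyring n \<Longrightarrow> PI n S \<subseteq> polyring n"
  unfolding ideal_gen_def by (auto intro!: polyring_sum)

lemma PI_least:
  assumes "S \<subseteq> T" "\<And>p q. p \<in> T \<Longrightarrow> q \<in> T \<Longrightarrow> p + q \<in> T" "0 \<in> T"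
    "\<And>p c. p \<in> T \<Longrightarrow> c \<in> polyring n \<Longrightarrow> c * p \<in> T"
  shows "PI n S \<subseteq> T"
proof
  fix p assume "p \<in> PI n S"
  then obtain F r where F: "finite F" "F \<subseteq> S" "\<forall>s\<in>F. r s \<in> polyring n" "p = (\<Sum>s\<in>F. r s * s)"
    unfolding ideal_gen_def by auto
  have "(\<Sum>s\<in>F. r s * s) \<in> T" using F(1-3)
  proof (induction F rule: finite_induct)
    case empty then show ?case using assms by simp
  next
    case (insert x F)
    have "r x * x \<in> T" using insert.prems assms(1,4) by blast
    moreover have "(\<Sum>s\<in>F. r s * s) \<in> T" using insert by blast
    ultimately show ?case using insert.hyps assms(2) by simp
  qed
  then show "p \<in> T" using F by simp
qed

lemma PI_trans: "S \<subseteq> PI n T \<Longrightarrow> PI n S \<subseteq> PI n T"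
  by (rule PI_least) (auto simp del: PI_mult PI_mult' intro: PI_add PI_mult)

lemma PI_union_split:
  assumes "p \<in> PI n (A \<union> B)"
  shows "\<exists>a b. a \<in> PI n A \<and> b \<in> PI n B \<and> p = a + b"
proof -
  from assms obtain F r where F: "finite F" "F \<subseteq> A \<union> B" "\<forall>s\<in>F. r s \<in> polyring n" "p = (\<Sum>s\<in>F. r s * s)"
    unfolding ideal_gen_def by auto
  have "p = (\<Sum>s\<in>F \<inter> A. r s * s) + (\<Sum>s\<in>F - A. r s * s)"
    using F(4) sum.Int_Diff[OF F(1), of "\<lambda>s. r s * s" A] by simp
  moreover have "(\<Sum>s\<in>F \<inter> A. r s * s) \<in> PI n A"
    by (rule PI_sum, rule PI_mult, rule PI_gen) (use F in auto)
  moreover have "(\<Sum>s\<in>F - A. r s * s) \<in> PI n B"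
    by (rule PI_sum, rule PI_mult, rule PI_gen) (use F in auto)
  ultimately show ?thesis by blast
qed

abbreviation Rad where "Rad n S \<equiv> radical_in (polyring n) (PI n S)"

lemma Rad_PI: "S \<subseteq> polyring n \<Longrightarrow> p \<in> PI n S \<Longrightarrow> p \<in> Rad n S"
  unfolding radical_in_def using PI_subset by (metis (mono_tags, lifting) mem_Collect_eq power_one_right subsetD)

lemma Rad_poly: "p \<in> Rad n S \<Longrightarrow> p \<in> polyring n"
  unfolding radical_in_def by auto

lemma Rad_mult[simp]: "p \<in> Rad n S \<Longrightarrow> c \<in> polyring n \<Longrightarrow> c * p \<in> Rad n S"
  unfolding radical_in_def by (auto simp: power_mult_distrib intro!: PI_mult)

lemma Rad_mult'[simp]: "p \<in> Rad n S \<Longrightarrow> c \<in> polyring n \<Longrightarrow> p * c \<in> Rad n S"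
  using Rad_mult by (metis mult.commute)

lemma Rad_root: "p \<in> polyring n \<Longrightarrow> p ^ k \<in> Rad n S \<Longrightarrow> p \<in> Rad n S"
  unfolding radical_in_def by (auto simp: power_mult[symmetric])

lemma PI_pow_ge: "p ^ a \<in> PI n S \<Longrightarrow> p \<in> polyring n \<Longrightarrow> a \<le> k \<Longrightarrow> p ^ k \<in> PI n S"
proof -
  assume "p ^ a \<in> PI n S" "p \<in> polyring n" "a \<le> k"
  then have "p ^ (k - a) * p ^ a \<in> PI n S" by simp
  then show ?thesis using \<open>a \<le> k\<close> by (simp add: power_add[symmetric])
qed

lemma Rad_add[simp]:
  assumes "p \<in> Rad n S" "q \<in> Rad n S"
  shows "p + q \<in> Rad n S"
proof -
  obtain a b where ab: "p ^ a \<in> PI n S" "q ^ b \<in> PI n S" and pq: "p \<in> polyring n" "q \<in> polyring n"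
    using assms unfolding radical_in_def by auto
  have "(p + q) ^ (a + b) = (\<Sum>k\<le>a + b. of_nat ((a + b) choose k) * p ^ k * q ^ (a + b - k))"
    by (rule binomial_ring)
  also have "\<dots> \<in> PI n S"
  proof (rule PI_sum)
    fix k assume "k \<in> {..a + b}"
    show "of_nat ((a + b) choose k) * p ^ k * q ^ (a + b - k) \<in> PI n S"
    proof (cases "a \<le> k")
      case True
      then have "p ^ k \<in> PI n S" using PI_pow_ge ab pq by blast
      then show ?thesis using pq by (simp add: mult.commute mult.left_commute)
    next
      case False
      then have "q ^ (a + b - k) \<in> PI n S" using PI_pow_ge[of q b] ab pq by auto
      then show ?thesis using pq by simp
    qed
  qed
  finally show ?thesis using pq unfolding radical_in_def by auto
qed

lemma Rad_uminus[simp]: "p \<in> Rad n S \<Longrightarrow> - p \<in> Rad n S"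
  using Rad_mult[of p n S "-1"] by simp

lemma Rad_minus[simp]: "p \<in> Rad n S \<Longrightarrow> q \<in> Rad n S \<Longrightarrow> p - q \<in> Rad n S"
  by (metis Rad_add Rad_uminus diff_conv_add_uminus)

lemma Rad_zero[simp]: "0 \<in> Rad n S"
  unfolding radical_in_def by (auto intro!: exI[of _ 1])


lemma pm_expansion: "f = (\<Sum>a\<in>Poly_Mapping.keys f. Poly_Mapping.single a (Poly_Mapping.lookup f a))"
proof (rule poly_mapping_eqI)
  fix k
  have "Poly_Mapping.lookup (\<Sum>a\<in>Poly_Mapping.keys f. Poly_Mapping.single a (Poly_Mapping.lookup f a)) k
      = (\<Sum>a\<in>Poly_Mapping.keys f. if a = k then Poly_Mapping.lookup f a else 0)"
    by (simp add: lookup_sum lookup_single when_def)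
  also have "\<dots> = Poly_Mapping.lookup f k"
    by (simp add: in_keys_iff)
  finally show "Poly_Mapping.lookup f k = Poly_Mapping.lookup (\<Sum>a\<in>Poly_Mapping.keys f. Poly_Mapping.single a (Poly_Mapping.lookup f a)) k"
    by simp
qed

definition kill :: "nat set \<Rightarrow> 'a::comm_ring_1 mpoly \<Rightarrow> 'a mpoly" where
  "kill Z f = (\<Sum>m\<in>Poly_Mapping.keys f. if Poly_Mapping.keys m \<inter> Z = {} then Poly_Mapping.single m (Poly_Mapping.lookup f m) else 0)"

lemma lookup_kill: "Poly_Mapping.lookup (kill Z f) m = (if Poly_Mapping.keys m \<inter> Z = {} then Poly_Mapping.lookup f m else 0)"
proof -
  have "Poly_Mapping.lookup (kill Z f) m = (\<Sum>a\<in>Poly_Mapping.keys f. if a = m then (if Poly_Mapping.keys m \<inter> Z = {} then Poly_Mapping.lookup f m else 0) else 0)"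
    unfolding kill_def lookup_sum by (rule sum.cong) (auto simp: lookup_single when_def)
  also have "\<dots> = (if Poly_Mapping.keys m \<inter> Z = {} then Poly_Mapping.lookup f m else 0)"
    by (simp add: in_keys_iff)
  finally show ?thesis .
qed

lemma kill_eqI: "(\<And>m. Poly_Mapping.lookup f m = Poly_Mapping.lookup g m) \<Longrightarrow> f = g"
  by (rule poly_mapping_eqI)

lemma kill_add: "kill Z (f + g) = kill Z f + kill Z g"
  by (rule poly_mapping_eqI) (simp add: lookup_kill lookup_add)

lemma kill_zero[simp]: "kill Z 0 = 0"
  by (rule poly_mapping_eqI) (simp add: lookup_kill)

lemma kill_uminus: "kill Z (- f) = - kill Z f"
  by (rule poly_mapping_eqI) (simp add: lookup_kill)

lemma kill_minus: "kill Z (f - g) = kill Z f - kill Z g"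
  by (rule poly_mapping_eqI) (simp add: lookup_kill lookup_minus)

lemma kill_single: "kill Z (Poly_Mapping.single m c) = (if Poly_Mapping.keys m \<inter> Z = {} then Poly_Mapping.single m c else 0)"
  by (rule poly_mapping_eqI) (auto simp: lookup_kill lookup_single when_def)

lemma kill_one[simp]: "kill Z 1 = 1"
  by (rule poly_mapping_eqI) (auto simp: lookup_kill lookup_one when_def)

lemma kill_sum: "kill Z (sum h A) = (\<Sum>x\<in>A. kill Z (h x))"
  by (induction A rule: infinite_finite_induct) (auto simp: kill_add)

lemma keys_add_nat': "Poly_Mapping.keys (a + b :: nat \<Rightarrow>\<^sub>0 nat) = Poly_Mapping.keys a \<union> Poly_Mapping.keys b"
  by (rule keys_add_nat)

lemma kill_mult: "kill Z (f * g) = kill Z f * kill Z g"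
proof -
  let ?sf = "\<lambda>a. Poly_Mapping.single a (Poly_Mapping.lookup f a)"
  let ?sg = "\<lambda>b. Poly_Mapping.single b (Poly_Mapping.lookup g b)"
  let ?c = "\<lambda>m. Poly_Mapping.keys m \<inter> Z = {}"
  have "f * g = (\<Sum>a\<in>Poly_Mapping.keys f. ?sf a) * (\<Sum>b\<in>Poly_Mapping.keys g. ?sg b)"
    using pm_expansion[of f] pm_expansion[of g] by simp
  also have "\<dots> = (\<Sum>a\<in>Poly_Mapping.keys f. \<Sum>b\<in>Poly_Mapping.keys g. ?sf a * ?sg b)"
    by (rule sum_product)
  finally have fg: "kill Z (f * g) = (\<Sum>a\<in>Poly_Mapping.keys f. \<Sum>b\<in>Poly_Mapping.keys g. kill Z (?sf a * ?sg b))"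
    by (simp add: kill_sum)
  have kf: "kill Z f = (\<Sum>a\<in>Poly_Mapping.keys f. kill Z (?sf a))"
  proof -
    have "kill Z f = kill Z (\<Sum>a\<in>Poly_Mapping.keys f. ?sf a)" by (rule arg_cong[where f="kill Z"], rule pm_expansion)
    then show ?thesis by (simp add: kill_sum)
  qed
  have kg: "kill Z g = (\<Sum>b\<in>Poly_Mapping.keys g. kill Z (?sg b))"
  proof -
    have "kill Z g = kill Z (\<Sum>b\<in>Poly_Mapping.keys g. ?sg b)" by (rule arg_cong[where f="kill Z"], rule pm_expansion)
    then show ?thesis by (simp add: kill_sum)
  qed
  have "kill Z f * kill Z g = (\<Sum>a\<in>Poly_Mapping.keys f. kill Z (?sf a)) * (\<Sum>b\<in>Poly_Mapping.keys g. kill Z (?sg b))"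
    using kf kg by simp
  also have "\<dots> = (\<Sum>a\<in>Poly_Mapping.keys f. \<Sum>b\<in>Poly_Mapping.keys g. kill Z (?sf a) * kill Z (?sg b))"
    by (rule sum_product)
  also have "\<dots> = (\<Sum>a\<in>Poly_Mapping.keys f. \<Sum>b\<in>Poly_Mapping.keys g. kill Z (?sf a * ?sg b))"
    by (intro sum.cong refl) (auto simp: kill_single mult_single keys_add_nat')
  finally show ?thesis using fg by simp
qed

lemma kill_hom: "comm_ring_hom (kill Z)"
  by unfold_locales (auto simp: kill_add kill_mult)

lemma kill_power: "kill Z (f ^ k) = kill Z f ^ k"
  by (induction k) (auto simp: kill_mult)

lemma kill_prod: "kill Z (prod h A) = (\<Prod>x\<in>A. kill Z (h x))"
  by (induction A rule: infinite_finite_induct) (auto simp: kill_mult)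

lemma kill_Var: "kill Z (Var k) = (if k \<in> Z then 0 else Var k)"
  unfolding Var_def by (simp add: kill_single)

lemma kill_of_nat[simp]: "kill Z (of_nat c) = of_nat c"
  by (induction c) (auto simp: kill_add)

lemma kill_of_int[simp]: "kill Z (of_int c) = of_int c"
  by (cases c) (auto simp: kill_uminus kill_minus)

lemma keys_minus_nat: "Poly_Mapping.keys (m - s :: nat \<Rightarrow>\<^sub>0 nat) \<subseteq> Poly_Mapping.keys m"
  by (auto simp: in_keys_iff lookup_minus)

lemma single_in_polyring: "Poly_Mapping.keys m \<subseteq> {1..n} \<Longrightarrow> Poly_Mapping.single m c \<in> polyring n"
  by (simp add: in_polyring_iff)

lemma mono_factor:
  assumes "k \<in> Poly_Mapping.keys m"
  shows "Poly_Mapping.single m c = Poly_Mapping.single (m - Poly_Mapping.single k 1) c * Var k"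
proof -
  have "m - Poly_Mapping.single k 1 + Poly_Mapping.single k 1 = m"
    using assms by (intro poly_mapping_eqI) (auto simp: lookup_add lookup_minus lookup_single when_def in_keys_iff)
  then show ?thesis unfolding Var_def mult_single by simp
qed

lemma mono_in_PI:
  assumes "k \<in> Poly_Mapping.keys m" "Poly_Mapping.keys m \<subseteq> {1..n}" "Var k \<in> S"
  shows "Poly_Mapping.single m c \<in> PI n S"
proof -
  have "Poly_Mapping.single (m - Poly_Mapping.single k 1) c \<in> polyring n"
    using assms(2) keys_minus_nat by (intro single_in_polyring) blast
  then show ?thesis unfolding mono_factor[OF assms(1)] by (intro PI_mult PI_gen assms)
qed

lemma mono_in_PI2:
  assumes "a \<in> Poly_Mapping.keys m" "b \<in> Poly_Mapping.keys m" "a \<noteq> b" "Poly_Mapping.keys m \<subseteq> {1..n}" "Var a * Var b \<in> S"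
  shows "Poly_Mapping.single m c \<in> PI n S"
proof -
  let ?m1 = "m - Poly_Mapping.single a 1"
  have b1: "b \<in> Poly_Mapping.keys ?m1" using assms(2,3) by (auto simp: in_keys_iff lookup_minus lookup_single when_def)
  have "Poly_Mapping.single (?m1 - Poly_Mapping.single b 1) c \<in> polyring n"
    using assms(4) keys_minus_nat[of m] keys_minus_nat[of ?m1] by (intro single_in_polyring) blast
  moreover have "Poly_Mapping.single m c = Poly_Mapping.single (?m1 - Poly_Mapping.single b 1) c * (Var a * Var b)"
    unfolding mono_factor[OF assms(1), of c] mono_factor[OF b1, of c] by (simp add: ac_simps)
  ultimately show ?thesis by (metis PI_mult' PI_gen assms(5) mult.commute)
qed

lemma poly_in_PI_by_monos:
  assumes "\<And>m. m \<in> Poly_Mapping.keys f \<Longrightarrow> Poly_Mapping.single m (Poly_Mapping.lookup f m) \<in> PI n S"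
  shows "f \<in> PI n S"
  by (subst pm_expansion) (rule PI_sum, rule assms)

lemma kill_diff_PI:
  assumes f: "f \<in> polyring n"
  shows "f - kill Z f \<in> PI n (Var ` (Z \<inter> {1..n}))"
proof -
  have "f - kill Z f = (\<Sum>m\<in>Poly_Mapping.keys f. if Poly_Mapping.keys m \<inter> Z = {} then 0 else Poly_Mapping.single m (Poly_Mapping.lookup f m))"
  proof -
    have "f - kill Z f = (\<Sum>m\<in>Poly_Mapping.keys f. Poly_Mapping.single m (Poly_Mapping.lookup f m)) - kill Z f"
      by (rule arg_cong[where f="\<lambda>x. x - kill Z f"], rule pm_expansion)
    also have "\<dots> = (\<Sum>m\<in>Poly_Mapping.keys f. Poly_Mapping.single m (Poly_Mapping.lookup f m) - (if Poly_Mapping.keys m \<inter> Z = {} then Poly_Mapping.single m (Poly_Mapping.lookup f m) else 0))"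
      unfolding kill_def by (simp add: sum_subtractf)
    also have "\<dots> = (\<Sum>m\<in>Poly_Mapping.keys f. if Poly_Mapping.keys m \<inter> Z = {} then 0 else Poly_Mapping.single m (Poly_Mapping.lookup f m))"
      by (rule sum.cong) auto
    finally show ?thesis .
  qed
  also have "\<dots> \<in> PI n (Var ` (Z \<inter> {1..n}))"
  proof (rule PI_sum)
    fix m assume m: "m \<in> Poly_Mapping.keys f"
    have km: "Poly_Mapping.keys m \<subseteq> {1..n}" using f m by (simp add: in_polyring_iff)
    show "(if Poly_Mapping.keys m \<inter> Z = {} then 0 else Poly_Mapping.single m (Poly_Mapping.lookup f m)) \<in> PI n (Var ` (Z \<inter> {1..n}))"
    proof (cases "Poly_Mapping.keys m \<inter> Z = {}")
      case False
      then obtain k where "k \<in> Poly_Mapping.keys m" "k \<in> Z" by blast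
      then show ?thesis using False km by (auto intro!: mono_in_PI)
    qed simp
  qed
  finally show ?thesis .
qed


definition gp :: "nat \<Rightarrow> nat \<Rightarrow> nat \<Rightarrow> bool" where
  "gp n a b \<longleftrightarrow> (a = 1 \<and> 3 \<le> b \<and> b \<le> n - 1) \<or> (a = 2 \<and> 4 \<le> b \<and> b \<le> n) \<or>
     (a = 3 \<and> 5 \<le> b \<and> b \<le> n) \<or> (4 \<le> a \<and> a \<le> n - 2 \<and> b = n)"

lemma In_gens_eq: "In_gens n = {Var a * Var b | a b. gp n a b}"
  unfolding In_gens_def gp_def by blast

lemma gp_gen: "gp n a b \<Longrightarrow> Var a * Var b \<in> In_gens n"
  unfolding In_gens_eq by blast

lemma gp_range: "n \<ge> 6 \<Longrightarrow> gp n a b \<Longrightarrow> 1 \<le> a \<and> a < b \<and> b \<le> n"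
  unfolding gp_def by auto

definition cliques :: "nat \<Rightarrow> nat set set" where
  "cliques n = {{1,2},{2,3},{3,4},{4..n-1},{n-1,n},{n,1}}"

lemma comb:
  assumes n: "n \<ge> 6" and T: "T \<subseteq> {1..n}" and nc: "\<forall>S\<in>cliques n. \<not> T \<subseteq> S"
  shows "\<exists>a\<in>T. \<exists>b\<in>T. gp n a b"
proof (rule ccontr)
  assume ng: "\<not> ?thesis"
  have ng': "\<And>a b. a \<in> T \<Longrightarrow> b \<in> T \<Longrightarrow> \<not> gp n a b" using ng by blast
  show False
  proof (cases "1 \<in> T")
    case True
    have "T \<subseteq> {1,2,n}"
    proof
      fix t assume "t \<in> T"
      moreover have "1 \<le> t \<and> t \<le> n" using T \<open>t \<in> T\<close> by auto
      ultimately show "t \<in> {1,2,n}" using ng'[OF True \<open>t \<in> T\<close>] n unfolding gp_def by simp presburger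
    qed
    moreover have "\<not> (2 \<in> T \<and> n \<in> T)" using ng' n unfolding gp_def by force
    ultimately have "T \<subseteq> {1,2} \<or> T \<subseteq> {n,1}" by blast
    then show False using nc unfolding cliques_def by blast
  next
    case n1: False
    show False
    proof (cases "2 \<in> T")
      case True
      have "T \<subseteq> {2,3}"
      proof
        fix t assume "t \<in> T"
        moreover have "1 \<le> t \<and> t \<le> n \<and> t \<noteq> 1" using T \<open>t \<in> T\<close> n1 by auto
        ultimately show "t \<in> {2,3}" using ng'[OF True \<open>t \<in> T\<close>] n unfolding gp_def by simp presburger
      qed
      then show False using nc unfolding cliques_def by blast
    next
      case n2: False
      show False
      proof (cases "3 \<in> T")
        case True
        have "T \<subseteq> {3,4}"
        proof
          fix t assume "t \<in> T"
          moreover have "1 \<le> t \<and> t \<le> n \<and> t \<noteq> 1 \<and> t \<noteq> 2" using T \<open>t \<in> T\<close> n1 n2 by auto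
          ultimately show "t \<in> {3,4}" using ng'[OF True \<open>t \<in> T\<close>] n unfolding gp_def by simp presburger
        qed
        then show False using nc unfolding cliques_def by blast
      next
        case n3: False
        have T4: "T \<subseteq> {4..n}"
        proof
          fix t assume "t \<in> T"
          then have "1 \<le> t \<and> t \<le> n \<and> t \<noteq> 1 \<and> t \<noteq> 2 \<and> t \<noteq> 3" using T n1 n2 n3 by auto
          then show "t \<in> {4..n}" by auto
        qed
        show False
        proof (cases "n \<in> T")
          case True
          have "T \<subseteq> {n-1,n}"
          proof
            fix t assume "t \<in> T"
            moreover have "4 \<le> t \<and> t \<le> n" using T4 \<open>t \<in> T\<close> by auto
            ultimately show "t \<in> {n-1,n}" using ng'[OF \<open>t \<in> T\<close> True] n unfolding gp_def by simp presburger
          qed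
          then show False using nc unfolding cliques_def by blast
        next
          case False
          have "T \<subseteq> {4..n-1}"
          proof
            fix t assume "t \<in> T"
            then have "4 \<le> t \<and> t \<le> n \<and> t \<noteq> n" using T4 False by auto
            then show "t \<in> {4..n-1}" by simp presburger
          qed
          then show False using nc unfolding cliques_def by blast
        qed
      qed
    qed
  qed
qed

lemma gp_not_in_clique: "n \<ge> 6 \<Longrightarrow> gp n a b \<Longrightarrow> S \<in> cliques n \<Longrightarrow> \<not> (a \<in> S \<and> b \<in> S)"
  unfolding gp_def cliques_def by auto

lemma criterion:
  assumes n: "n \<ge> 6" and f: "f \<in> polyring n" and k: "\<And>S. S \<in> cliques n \<Longrightarrow> kill (- S) f = 0"
  shows "f \<in> PI n (In_gens n)"
proof (rule poly_in_PI_by_monos)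
  fix m assume m: "m \<in> Poly_Mapping.keys f"
  have km: "Poly_Mapping.keys m \<subseteq> {1..n}" using f m by (simp add: in_polyring_iff)
  have "\<not> Poly_Mapping.keys m \<subseteq> S" if S: "S \<in> cliques n" for S
  proof
    assume "Poly_Mapping.keys m \<subseteq> S"
    then have "Poly_Mapping.keys m \<inter> - S = {}" by blast
    then have "Poly_Mapping.lookup (kill (- S) f) m = Poly_Mapping.lookup f m" by (simp add: lookup_kill)
    then show False using k[OF S] m by (simp add: in_keys_iff)
  qed
  then obtain a b where ab: "a \<in> Poly_Mapping.keys m" "b \<in> Poly_Mapping.keys m" "gp n a b"
    using comb[OF n km] by blast
  then show "Poly_Mapping.single m (Poly_Mapping.lookup f m) \<in> PI n (In_gens n)"
    using gp_range[OF n ab(3)] km by (intro mono_in_PI2[OF ab(1,2)] gp_gen) auto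
qed

lemma kill_In:
  assumes n: "n \<ge> 6" and S: "S \<in> cliques n" and p: "p \<in> PI n (In_gens n)"
  shows "kill (- S) p = 0"
proof -
  have "PI n (In_gens n) \<subseteq> {p. kill (- S) p = 0}"
  proof (rule PI_least)
    show "In_gens n \<subseteq> {p. kill (- S) p = 0}"
    proof
      fix x assume "x \<in> In_gens n"
      then obtain a b where x: "x = Var a * Var b" "gp n a b" unfolding In_gens_eq by blast
      then show "x \<in> {p. kill (- S) p = 0}"
        using gp_not_in_clique[OF n x(2) S] by (auto simp: kill_mult kill_Var)
    qed
  qed (auto simp: kill_add kill_mult)
  then show ?thesis using p by blast
qed

lemma In_radical:
  assumes n: "n \<ge> 6" and f: "(f :: 'a::field mpoly) \<in> polyring n" and fk: "f ^ k \<in> PI n (In_gens n)"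
  shows "f \<in> PI n (In_gens n)"
proof (rule criterion[OF n f])
  fix S assume S: "S \<in> cliques n"
  have "kill (- S) f ^ k = 0" using kill_In[OF n S fk] by (simp add: kill_power)
  then show "kill (- S) f = 0" by simp
qed


lemma prod_list_diag: "M \<in> carrier_mat k k \<Longrightarrow> prod_list (diag_mat M) = (\<Prod>i<k. M $$ (i,i))"
  unfolding diag_mat_def using prod.distinct_set_conv_list[of "[0..<k]" "\<lambda>i. M $$ (i,i)"]
  by (simp add: atLeast0LessThan)

lemma det_bidiag_corner:
  fixes A :: "'a::comm_ring_1 mat"
  assumes A: "A \<in> carrier_mat N N" and N: "N \<ge> 2"
    and z: "\<And>i j. i < N \<Longrightarrow> j < N \<Longrightarrow> \<not> (j = i \<or> j + 1 = i \<or> (i = 0 \<and> j = N - 1)) \<Longrightarrow> A $$ (i,j) = 0"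
  shows "det A = (\<Prod>i<N. A $$ (i,i)) + (-1)^(N-1) * A $$ (0, N-1) * (\<Prod>i<N-1. A $$ (i+1, i))"
proof -
  have "det A = (\<Sum>j<N. A $$ (0,j) * cofactor A 0 j)"
    using laplace_expansion_row[OF A, of 0] N by simp
  also have "\<dots> = (\<Sum>j\<in>{0, N-1}. A $$ (0,j) * cofactor A 0 j)"
    by (rule sum.mono_neutral_right) (use N z in auto)
  also have "\<dots> = A $$ (0,0) * cofactor A 0 0 + A $$ (0,N-1) * cofactor A 0 (N-1)"
    using N by simp
  also have "cofactor A 0 0 = (\<Prod>i<N-1. A $$ (i+1,i+1))"
  proof -
    have M: "mat_delete A 0 0 \<in> carrier_mat (N-1) (N-1)" using mat_delete_carrier[OF A] .
    have "det (mat_delete A 0 0) = prod_list (diag_mat (mat_delete A 0 0))"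
      by (rule det_lower_triangular[OF _ M]) (use A in \<open>auto simp: mat_delete_def intro!: z\<close>)
    also have "\<dots> = (\<Prod>i<N-1. A $$ (i+1,i+1))"
      unfolding prod_list_diag[OF M] by (rule prod.cong) (use A in \<open>auto simp: mat_delete_def\<close>)
    finally show ?thesis unfolding cofactor_def by simp
  qed
  also have "cofactor A 0 (N-1) = (-1)^(N-1) * (\<Prod>i<N-1. A $$ (i+1,i))"
  proof -
    have M: "mat_delete A 0 (N-1) \<in> carrier_mat (N-1) (N-1)" using mat_delete_carrier[OF A] .
    have "det (mat_delete A 0 (N-1)) = prod_list (diag_mat (mat_delete A 0 (N-1)))"
      by (rule det_upper_triangular[OF _ M]) (use A in \<open>auto simp: mat_delete_def upper_triangular_def intro!: z\<close>)
    also have "\<dots> = (\<Prod>i<N-1. A $$ (i+1,i))"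
      unfolding prod_list_diag[OF M] by (rule prod.cong) (use A in \<open>auto simp: mat_delete_def\<close>)
    finally show ?thesis unfolding cofactor_def by simp
  qed
  also have "A $$ (0,0) * (\<Prod>i<N-1. A $$ (i+1,i+1)) = (\<Prod>i<N. A $$ (i,i))"
  proof -
    have "(\<Prod>i<N. A $$ (i,i)) = (\<Prod>i<Suc (N-1). A $$ (i,i))" using N by simp
    also have "\<dots> = A $$ (0,0) * (\<Prod>i<N-1. A $$ (Suc i, Suc i))" by (rule prod.lessThan_Suc_shift)
    finally show ?thesis by simp
  qed
  finally show ?thesis by (simp add: mult.assoc)
qed

lemma det_polyring:
  assumes A: "A \<in> carrier_mat k k" and e: "\<And>i j. i < k \<Longrightarrow> j < k \<Longrightarrow> A $$ (i,j) \<in> polyring n"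
  shows "det A \<in> polyring n"
proof -
  have "det A = (\<Sum>p\<in>{p. p permutes {0..<k}}. signof p * (\<Prod>i = 0..<k. A $$ (i, p i)))"
    using det_def'[OF A] .
  also have "\<dots> \<in> polyring n"
  proof (rule polyring_sum)
    fix p assume "p \<in> {p. p permutes {0..<k}}"
    then have p: "p permutes {0..<k}" by simp
    have "signof p \<in> polyring n" unfolding sign_def by simp
    moreover have "(\<Prod>i = 0..<k. A $$ (i, p i)) \<in> polyring n"
      using p by (intro polyring_prod e) (auto simp: permutes_in_image)
    ultimately show "signof p * (\<Prod>i = 0..<k. A $$ (i, p i)) \<in> polyring n" by simp
  qed
  finally show ?thesis .
qed

lemma det_zero_col:
  assumes A: "A \<in> carrier_mat k k" and j: "j < k" and z: "\<And>i. i < k \<Longrightarrow> A $$ (i,j) = 0"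
  shows "det A = 0"
  using laplace_expansion_column[OF A j] z by simp


lemma bentry_super: "n \<ge> 6 \<Longrightarrow> i + 1 = j \<Longrightarrow> 2 \<le> j \<Longrightarrow> j \<le> n - 4 \<Longrightarrow> bentry n i j = Var 3 * Var (3 + j)"
proof -
  assume a: "n \<ge> 6" "i + 1 = j" "2 \<le> j" "j \<le> n - 4"
  then have "\<not> (i = j \<and> 1 \<le> j \<and> j \<le> n - 4)" "\<not> (i = n - 3 \<and> j = n - 3)" "\<not> (i = j + 1 \<and> 1 \<le> j \<and> j \<le> n - 4)"
    "\<not> i \<ge> j + 2" by auto
  then show ?thesis unfolding bentry_def using a by (simp only: if_False) simp
qed

lemma bentry_lastcol: "n \<ge> 6 \<Longrightarrow> j = n - 3 \<Longrightarrow> 2 \<le> i \<Longrightarrow> i \<le> n - 4 \<Longrightarrow> bentry n i j = Var (2 + i)"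
proof -
  assume a: "n \<ge> 6" "j = n - 3" "2 \<le> i" "i \<le> n - 4"
  then have "\<not> (i = j \<and> 1 \<le> j \<and> j \<le> n - 4)" "\<not> (i = n - 3 \<and> j = n - 3)" "\<not> (i = j + 1 \<and> 1 \<le> j \<and> j \<le> n - 4)"
    "\<not> i \<ge> j + 2" "\<not> (i + 1 = j \<and> 2 \<le> j \<and> j \<le> n - 4)" "\<not> (j = n - 3 \<and> i = 1)" by auto
  then show ?thesis unfolding bentry_def using a by (simp only: if_False) simp
qed

lemma bentry_other: "n \<ge> 6 \<Longrightarrow> i \<noteq> j \<Longrightarrow> i \<noteq> j + 1 \<Longrightarrow> \<not> (i + 1 = j \<and> 2 \<le> j \<and> j \<le> n - 4) \<Longrightarrow>
   \<not> (j = n - 3 \<and> 1 \<le> i \<and> i \<le> n - 4) \<Longrightarrow> i \<ge> 1 \<Longrightarrow> bentry n i j = 0"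
proof -
  assume a: "n \<ge> 6" "i \<noteq> j" "i \<noteq> j + 1" "\<not> (i + 1 = j \<and> 2 \<le> j \<and> j \<le> n - 4)" "\<not> (j = n - 3 \<and> 1 \<le> i \<and> i \<le> n - 4)" "i \<ge> 1"
  then have "\<not> (i = j \<and> 1 \<le> j \<and> j \<le> n - 4)" "\<not> (i = n - 3 \<and> j = n - 3)" "\<not> (i = j + 1 \<and> 1 \<le> j \<and> j \<le> n - 4)"
     "\<not> (j = n - 3 \<and> i = 1)" "\<not> (j = n - 3 \<and> 2 \<le> i \<and> i \<le> n - 4)" by auto
  then show ?thesis unfolding bentry_def using a by (simp only: if_False) simp
qed

lemma bentry_diag: "1 \<le> i \<Longrightarrow> i \<le> n - 4 \<Longrightarrow> bentry n i i = Var 1"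
  unfolding bentry_def by simp

lemma bentry_last: "n \<ge> 6 \<Longrightarrow> bentry n (n-3) (n-3) = Var 3"
  unfolding bentry_def by auto

lemma bentry_sub: "n \<ge> 6 \<Longrightarrow> 1 \<le> j \<Longrightarrow> j \<le> n - 4 \<Longrightarrow> bentry n (j+1) j = Var 2"
  unfolding bentry_def by auto

lemma bentry_corner: "n \<ge> 6 \<Longrightarrow> bentry n 1 (n-3) = Var 2"
  unfolding bentry_def by auto

lemma bentry_low: "i \<ge> j + 2 \<Longrightarrow> n \<ge> 6 \<Longrightarrow> j \<ge> 1 \<Longrightarrow> bentry n i j = 0"
  unfolding bentry_def by auto

lemma bentry_polyring:
  assumes n: "n \<ge> 6" and ij: "1 \<le> i" "i \<le> n - 3" "1 \<le> j" "j \<le> n - 3"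
  shows "(bentry n i j :: 'a::comm_ring_1 mpoly) \<in> polyring n"
proof -
  consider "i = j" "j \<le> n - 4" | "i = j" "j = n - 3" | "i = j + 1" | "i + 1 = j \<and> 2 \<le> j \<and> j \<le> n - 4"
    | "j = n - 3" "i = 1" | "j = n - 3" "2 \<le> i" "i \<le> n - 4"
    | "i \<noteq> j" "i \<noteq> j + 1" "\<not> (i + 1 = j \<and> 2 \<le> j \<and> j \<le> n - 4)" "\<not> (j = n - 3 \<and> 1 \<le> i \<and> i \<le> n - 4)"
    using ij by linarith
  then show ?thesis
  proof cases
    case 1 then show ?thesis using ij n by (simp add: bentry_diag)
  next
    case 2 then show ?thesis using ij n by (simp add: bentry_last)
  next
    case 3
    then have "j \<le> n - 4" using ij by linarith
    then have "(bentry n (j+1) j :: 'a mpoly) = Var 2" using 3 ij by (intro bentry_sub[OF n]) auto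
    then show ?thesis using 3 n by simp
  next
    case 4
    then have "(bentry n i j :: 'a mpoly) = Var 3 * Var (3 + j)" by (intro bentry_super[OF n]) auto
    moreover have "Var 3 * Var (3 + j) \<in> polyring n" using 4 n by (intro polyring_mult polyring_Var) auto
    ultimately show ?thesis by simp
  next
    case 5
    then have "(bentry n i j :: 'a mpoly) = Var 2" using bentry_corner[OF n] by simp
    then show ?thesis using 5 n by simp
  next
    case 6
    then have "(bentry n i j :: 'a mpoly) = Var (2 + i)" by (intro bentry_lastcol[OF n]) auto
    then show ?thesis using 6 n by simp
  next
    case 7
    then have "(bentry n i j :: 'a mpoly) = 0" using ij by (intro bentry_other[OF n]) auto
    then show ?thesis by simp
  qed
qed

lemma Bmat_carrier: "Bmat n \<in> carrier_mat (n-3) (n-3)"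
  unfolding Bmat_def by simp

lemma Bmat_index: "i < n - 3 \<Longrightarrow> j < n - 3 \<Longrightarrow> Bmat n $$ (i,j) = bentry n (Suc i) (Suc j)"
  unfolding Bmat_def by simp

lemma det_B_polyring: assumes n: "n \<ge> 6" shows "det (Bmat n) \<in> polyring n"
  by (rule det_polyring[OF Bmat_carrier]) (simp add: Bmat_index bentry_polyring[OF n])

lemma Dpoly_polyring: "n \<ge> 6 \<Longrightarrow> Dpoly n \<in> polyring n"
  unfolding Dpoly_def by (intro polyring_minus polyring_mult polyring_power polyring_uminus polyring_one polyring_Var det_B_polyring) simp_all

lemma qpoly_polyring: "n \<ge> 6 \<Longrightarrow> 1 \<le> i \<Longrightarrow> i \<le> n - 3 \<Longrightarrow> qpoly n i \<in> polyring n"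
  unfolding qpoly_def by (intro polyring_sum polyring_mult bentry_polyring polyring_Var) auto

definition KB where "KB Z n = map_mat (kill Z) (Bmat n)"

lemma KB_carrier: "KB Z n \<in> carrier_mat (n-3) (n-3)"
  unfolding KB_def using Bmat_carrier by simp

lemma KB_index: "i < n - 3 \<Longrightarrow> j < n - 3 \<Longrightarrow> KB Z n $$ (i,j) = (kill Z (bentry n (Suc i) (Suc j)) :: 'a::comm_ring_1 mpoly)"
proof -
  assume ij: "i < n - 3" "j < n - 3"
  have d: "dim_row (Bmat n :: 'a mpoly mat) = n - 3" "dim_col (Bmat n :: 'a mpoly mat) = n - 3" by (simp_all add: Bmat_def)
  show ?thesis unfolding KB_def using ij d by (simp add: index_map_mat Bmat_index)
qed

lemma det_KB: "det (KB Z n) = kill Z (det (Bmat n))"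
  unfolding KB_def by (rule comm_ring_hom.hom_det[OF kill_hom])

lemma prod_last_split: "k \<ge> 1 \<Longrightarrow> (\<Prod>i<k. if i < k - 1 then a else b) = a ^ (k-1) * (b :: 'b::comm_monoid_mult)"
proof -
  assume "k \<ge> 1"
  then obtain m where k: "k = Suc m" by (cases k) auto
  have "(\<Prod>i<Suc m. if i < m then a else b) = (\<Prod>i<m. if i < m then a else b) * b"
    by simp
  also have "(\<Prod>i<m. if i < m then a else b) = (\<Prod>i<m. a)" by (rule prod.cong) auto
  finally show ?thesis using k by simp
qed

lemma KB_struct:
  fixes Z :: "nat set"
  assumes n: "n \<ge> 6" and Z: "{4..n} \<subseteq> Z" and ij: "i < n - 3" "j < n - 3" "\<not> (j = i \<or> j + 1 = i \<or> i = 0 \<and> j = n - 3 - 1)"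
  shows "(KB Z n :: 'a::comm_ring_1 mpoly mat) $$ (i, j) = 0"
proof -
  have kz: "kill Z (Var k :: 'a mpoly) = 0" if "4 \<le> k" "k \<le> n" for k using Z that by (auto simp: kill_Var)
  have "kill Z (bentry n (Suc i) (Suc j) :: 'a mpoly) = 0"
  proof (cases "Suc i + 1 = Suc j \<and> 2 \<le> Suc j \<and> Suc j \<le> n - 4")
    case True
    then have "bentry n (Suc i) (Suc j) = (Var 3 * Var (3 + Suc j) :: 'a mpoly)" using bentry_super[OF n] by blast
    moreover have "kill Z (Var (3 + Suc j) :: 'a mpoly) = 0" by (rule kz) (use True n in auto)
    ultimately show ?thesis by (simp add: kill_mult)
  next
    case F1: False
    show ?thesis
    proof (cases "Suc j = n - 3 \<and> 1 \<le> Suc i \<and> Suc i \<le> n - 4")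
      case True
      then have "j = n - 3 - 1" by linarith
      then have i0: "i \<noteq> 0" using ij(3) by auto
      then have "2 \<le> Suc i" by simp
      then have "bentry n (Suc i) (Suc j) = (Var (2 + Suc i) :: 'a mpoly)" using bentry_lastcol[OF n] True by blast
      moreover have "kill Z (Var (2 + Suc i) :: 'a mpoly) = 0" by (rule kz) (use True n i0 in auto)
      ultimately show ?thesis by simp
    next
      case False
      have "bentry n (Suc i) (Suc j) = (0 :: 'a mpoly)"
        by (rule bentry_other[OF n]) (use ij F1 False in auto)
      then show ?thesis by simp
    qed
  qed
  then show ?thesis by (simp add: KB_index[OF ij(1,2)])
qed

lemma det_KB_big:
  fixes Z :: "nat set"
  assumes n: "n \<ge> 6" and Z: "{4..n} \<subseteq> Z"
  shows "kill Z (det (Bmat n :: 'a::comm_ring_1 mpoly mat)) = kill Z (Var 1) ^ (n-4) * kill Z (Var 3) + (-1)^(n-4) * kill Z (Var 2) ^ (n-3)"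
proof -
  let ?K = "KB Z n :: 'a mpoly mat"
  have d: "det ?K = (\<Prod>i<n-3. ?K $$ (i,i)) + (-1)^(n-3-1) * ?K $$ (0, n-3-1) * (\<Prod>i<n-3-1. ?K $$ (i+1, i))"
    by (rule det_bidiag_corner[OF KB_carrier _ KB_struct[OF n Z]]) (use n in simp_all)
  have e1: "n - 3 = Suc (n - 4)" "n - 3 - 1 = n - 4" using n by auto
  have "(\<Prod>i<n-3. ?K $$ (i,i)) = (\<Prod>i<n-4. ?K $$ (i,i)) * ?K $$ (n-4, n-4)"
    unfolding e1 by simp
  also have "(\<Prod>i<n-4. ?K $$ (i,i)) = (\<Prod>i<n-4. kill Z (Var 1))"
    by (rule prod.cong) (use n in \<open>auto simp: KB_index bentry_diag\<close>)
  also have "?K $$ (n-4, n-4) = kill Z (Var 3)"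
  proof -
    have "?K $$ (n-4, n-4) = kill Z (bentry n (n-3) (n-3))" using e1 by (simp add: KB_index)
    then show ?thesis by (simp add: bentry_last[OF n])
  qed
  finally have p1: "(\<Prod>i<n-3. ?K $$ (i,i)) = kill Z (Var 1) ^ (n-4) * kill Z (Var 3)" by simp
  have p2: "?K $$ (0, n-3-1) = kill Z (Var 2)"
  proof -
    have "?K $$ (0, n-3-1) = kill Z (bentry n 1 (n-3))" using e1 by (simp add: KB_index)
    then show ?thesis by (metis bentry_corner[OF n])
  qed
  have "(\<Prod>i<n-3-1. ?K $$ (i+1, i)) = (\<Prod>i<n-4. kill Z (Var 2))"
    unfolding e1
  proof (rule prod.cong)
    fix x assume x: "x \<in> {..<n-4}"
    have "bentry n (Suc x + 1) (Suc x) = (Var 2 :: 'a mpoly)" by (rule bentry_sub[OF n]) (use x in auto)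
    then show "?K $$ (x+1, x) = kill Z (Var 2)" using x e1 by (simp add: KB_index)
  qed simp
  then have p3: "(\<Prod>i<n-3-1. ?K $$ (i+1, i)) = kill Z (Var 2) ^ (n-4)" by simp
  have "kill Z (Var 2) * kill Z (Var 2) ^ (n-4) = (kill Z (Var 2) ^ (n-3) :: 'a mpoly)"
    unfolding e1 by simp
  moreover have "det ?K = kill Z (Var 1) ^ (n-4) * kill Z (Var 3) + (-1)^(n-4) * (kill Z (Var 2) * kill Z (Var 2) ^ (n-4))"
    using d unfolding e1(2) p1 p2[unfolded e1(2)] p3[unfolded e1(2)] by (simp only: mult.assoc)
  ultimately show ?thesis unfolding det_KB by simp
qed


lemma KB_index_last: "n \<ge> 6 \<Longrightarrow> i < n - 3 \<Longrightarrow> KB Z n $$ (i, n - 4) = (kill Z (bentry n (Suc i) (n - 3)) :: 'a::comm_ring_1 mpoly)"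
proof -
  assume n: "n \<ge> 6" and i: "i < n - 3"
  have s: "Suc (n-4) = n-3" using n by simp
  have "KB Z n $$ (i, n-4) = (kill Z (bentry n (Suc i) (Suc (n-4))) :: 'a mpoly)"
    by (rule KB_index) (use n i in simp_all)
  then show ?thesis by (simp only: s)
qed

lemma det_KB_upper:
  fixes Z :: "nat set"
  assumes n: "n \<ge> 6" and Z: "2 \<in> Z"
  shows "kill Z (det (Bmat n :: 'a::comm_ring_1 mpoly mat)) = kill Z (Var 1) ^ (n-4) * kill Z (Var 3)"
proof -
  let ?K = "KB Z n :: 'a mpoly mat"
  have e1: "n - 3 = Suc (n - 4)" using n by auto
  have ut: "upper_triangular ?K"
    unfolding upper_triangular_def
  proof (intro allI impI)
    fix i j assume i: "i < dim_row ?K" and ji: "j < i"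
    have dr: "dim_row ?K = n - 3" by (simp add: KB_def Bmat_def)
    then have i': "i < n - 3" using i by simp
    then have j': "j < n - 3" using ji by simp
    show "?K $$ (i, j) = 0"
    proof (cases "i = j + 1")
      case True
      have "(bentry n (Suc j + 1) (Suc j) :: 'a mpoly) = Var 2"
        by (rule bentry_sub[OF n]) (use i' True in auto)
      then have "(bentry n (Suc i) (Suc j) :: 'a mpoly) = Var 2" using True by simp
      then show ?thesis using Z by (simp add: KB_index[OF i' j'] kill_Var)
    next
      case False
      then have "(bentry n (Suc i) (Suc j) :: 'a mpoly) = 0"
        using ji by (intro bentry_low[OF _ n]) auto
      then show ?thesis by (simp add: KB_index[OF i' j'])
    qed
  qed
  have "det ?K = prod_list (diag_mat ?K)" by (rule det_upper_triangular[OF ut KB_carrier])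
  also have "\<dots> = (\<Prod>i<n-3. ?K $$ (i,i))" by (rule prod_list_diag[OF KB_carrier])
  also have "\<dots> = (\<Prod>i<n-4. ?K $$ (i,i)) * ?K $$ (n-4, n-4)"
    unfolding e1 by simp
  also have "(\<Prod>i<n-4. ?K $$ (i,i)) = (\<Prod>i<n-4. kill Z (Var 1))"
    by (rule prod.cong) (use n in \<open>auto simp: KB_index bentry_diag\<close>)
  also have "?K $$ (n-4, n-4) = kill Z (Var 3)"
  proof -
    have "?K $$ (n-4, n-4) = kill Z (bentry n (n-3) (n-3))" using e1 by (simp add: KB_index)
    then show ?thesis by (simp add: bentry_last[OF n])
  qed
  finally show ?thesis unfolding det_KB by simp
qed

lemma det_KB_col0:
  fixes Z :: "nat set"
  assumes n: "n \<ge> 6" and Z: "1 \<in> Z" "2 \<in> Z"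
  shows "kill Z (det (Bmat n :: 'a::comm_ring_1 mpoly mat)) = 0"
proof -
  let ?K = "KB Z n :: 'a mpoly mat"
  have "det ?K = 0"
  proof (rule det_zero_col[OF KB_carrier])
    show "0 < n - 3" using n by simp
    fix i assume i: "i < n - 3"
    have j: "0 < n - 3" using n by simp
    consider "i = 0" | "i = 1" | "i \<ge> 2" by linarith
    then show "?K $$ (i, 0) = 0"
    proof cases
      case 1
      have "Suc 0 \<le> n - 4" using n by simp
      then have "(bentry n (Suc i) (Suc 0) :: 'a mpoly) = Var 1" using 1 by (simp add: bentry_diag)
      then show ?thesis using Z by (simp add: KB_index[OF i j] kill_Var)
    next
      case 2
      have "(bentry n (1 + 1) 1 :: 'a mpoly) = Var 2" by (rule bentry_sub[OF n]) (use n in auto)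
      then have "(bentry n (Suc i) (Suc 0) :: 'a mpoly) = Var 2" using 2 by simp
      then show ?thesis using Z by (simp add: KB_index[OF i j] kill_Var)
    next
      case 3
      then have "(bentry n (Suc i) (Suc 0) :: 'a mpoly) = 0" by (intro bentry_low[OF _ n]) auto
      then show ?thesis by (simp add: KB_index[OF i j])
    qed
  qed
  then show ?thesis unfolding det_KB .
qed

lemma det_KB_collast:
  fixes Z :: "nat set"
  assumes n: "n \<ge> 6" and Z: "2 \<in> Z" "3 \<in> Z" "{4..n-2} \<subseteq> Z"
  shows "kill Z (det (Bmat n :: 'a::comm_ring_1 mpoly mat)) = 0"
proof -
  let ?K = "KB Z n :: 'a mpoly mat"
  have e: "Suc (n - 3 - 1) = n - 3" using n by simp
  have "det ?K = 0"
  proof (rule det_zero_col[OF KB_carrier])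
    show j: "n - 3 - 1 < n - 3" using n by simp
    fix i assume i: "i < n - 3"
    have "i = 0 \<or> (1 \<le> i \<and> i \<le> n - 5) \<or> i = n - 4" using i by linarith
    have e4: "n - 3 - 1 = n - 4" by simp
    show "?K $$ (i, n - 3 - 1) = 0"
      unfolding e4 KB_index_last[OF n i]
      using \<open>i = 0 \<or> (1 \<le> i \<and> i \<le> n - 5) \<or> i = n - 4\<close>
    proof (elim disjE conjE)
      assume "i = 0"
      moreover have "(bentry n 1 (n - 3) :: 'a mpoly) = Var 2" by (rule bentry_corner[OF n])
      ultimately have "(bentry n (Suc i) (n - 3) :: 'a mpoly) = Var 2" by simp
      then show "kill Z (bentry n (Suc i) (n - 3) :: 'a mpoly) = 0" using Z by (simp add: kill_Var)
    next
      assume a: "1 \<le> i" "i \<le> n - 5"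
      then have "(bentry n (Suc i) (n - 3) :: 'a mpoly) = Var (2 + Suc i)" by (intro bentry_lastcol[OF n]) auto
      moreover have "2 + Suc i \<in> Z" using Z a by auto
      ultimately show "kill Z (bentry n (Suc i) (n - 3) :: 'a mpoly) = 0" by (simp add: kill_Var)
    next
      assume a: "i = n - 4"
      then have "Suc i = n - 3" using n by simp
      then have "(bentry n (Suc i) (n - 3) :: 'a mpoly) = Var 3" by (simp add: bentry_last[OF n])
      then show "kill Z (bentry n (Suc i) (n - 3) :: 'a mpoly) = 0" using Z by (simp add: kill_Var)
    qed
  qed
  then show ?thesis unfolding det_KB .
qed


lemma neg1_pow: "n \<ge> 4 \<Longrightarrow> (-1::'a::comm_ring_1) ^ (n - 4) = (-1) ^ n"
proof -
  assume "n \<ge> 4"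
  then have "n = (n - 4) + 4" by simp
  then have "(-1::'a) ^ n = (-1) ^ (n - 4) * (-1) ^ 4" by (metis power_add)
  then show ?thesis by simp
qed

lemma kill_Dpoly: "kill Z (Dpoly n) = kill Z (det (Bmat n)) - (-1) ^ n * kill Z (Var 2) ^ (n - 3)"
  unfolding Dpoly_def by (simp add: kill_minus kill_mult kill_power kill_uminus)

lemma Dpoly_In:
  assumes n: "n \<ge> 6"
  shows "(Dpoly n :: 'a::comm_ring_1 mpoly) \<in> PI n (In_gens n)"
proof (rule criterion[OF n Dpoly_polyring[OF n]])
  fix S assume S: "S \<in> cliques n"
  have n4: "n - 4 > 0" "n - 3 > 0" using n by auto
  from S consider "S = {1,2}" | "S = {2,3}" | "S = {3,4}" | "S = {4..n-1}" | "S = {n-1,n}" | "S = {n,1}"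
    unfolding cliques_def by blast
  then show "kill (- S) (Dpoly n :: 'a mpoly) = 0"
  proof cases
    case 1
    have "{4..n} \<subseteq> - S" using 1 by auto
    from det_KB_big[OF n this, where 'a='a] 1 n4 show ?thesis
      by (simp add: kill_Dpoly kill_Var neg1_pow n)
  next
    case 2
    have "{4..n} \<subseteq> - S" using 2 by auto
    from det_KB_big[OF n this, where 'a='a] 2 n4 show ?thesis
      by (simp add: kill_Dpoly kill_Var neg1_pow n zero_power[OF n4(1)])
  next
    case 3
    have "1 \<in> - S" "2 \<in> - S" using 3 by auto
    from det_KB_col0[OF n this, where 'a='a] 3 n4 show ?thesis
      by (simp add: kill_Dpoly kill_Var zero_power[OF n4(2)])
  next
    case 4
    have "1 \<in> - S" "2 \<in> - S" using 4 by auto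
    from det_KB_col0[OF n this, where 'a='a] 4 n4 show ?thesis
      by (simp add: kill_Dpoly kill_Var zero_power[OF n4(2)])
  next
    case 5
    have "1 \<in> - S" "2 \<in> - S" using 5 n by auto
    from det_KB_col0[OF n this, where 'a='a] 5 n4 n show ?thesis
      by (simp add: kill_Dpoly kill_Var zero_power[OF n4(2)])
  next
    case 6
    have "2 \<in> - S" "3 \<in> - S" "{4..n-2} \<subseteq> - S" using 6 n by auto
    from det_KB_collast[OF n this, where 'a='a] 6 n4 n show ?thesis
      by (simp add: kill_Dpoly kill_Var zero_power[OF n4(2)])
  qed
qed


lemma sum_sparse: "finite A \<Longrightarrow> T \<subseteq> A \<Longrightarrow> (\<And>j. j \<in> A \<Longrightarrow> j \<notin> T \<Longrightarrow> g j = 0) \<Longrightarrow> sum g A = sum g T"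
  by (rule sum.mono_neutral_right) auto

lemma q_first:
  assumes n: "n \<ge> 6"
  shows "(qpoly n 1 :: 'a::comm_ring_1 mpoly) = Var 1 * Var 4 + Var 3 * Var 5 * Var 5 + Var 2 * Var n"
proof -
  let ?g = "\<lambda>j. (bentry n 1 j :: 'a mpoly) * Var (3 + j)"
  have "(qpoly n 1 :: 'a mpoly) = sum ?g {1,2,n-3}"
    unfolding qpoly_def
  proof (rule sum_sparse)
    show "{1, 2, n - 3} \<subseteq> {1..n - 3}" using n by auto
    fix j assume j: "j \<in> {1..n-3}" "j \<notin> {1, 2, n - 3}"
    have "(bentry n 1 j :: 'a mpoly) = 0" by (rule bentry_other[OF n]) (use j in auto)
    then show "?g j = 0" by simp
  qed simp
  also have "\<dots> = ?g 1 + ?g 2 + ?g (n-3)"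
  proof -
    have "1 \<noteq> n - 3" "2 \<noteq> n - 3" using n by auto
    then show ?thesis by (simp add: add.assoc)
  qed
  also have "(bentry n 1 1 :: 'a mpoly) = Var 1" by (rule bentry_diag) (use n in auto)
  also have "(bentry n 1 2 :: 'a mpoly) = Var 3 * Var (3 + 2)" by (rule bentry_super[OF n]) (use n in auto)
  also have "(bentry n 1 (n-3) :: 'a mpoly) = Var 2" by (rule bentry_corner[OF n])
  also have "3 + (n - 3) = n" using n by simp
  finally show ?thesis by simp
qed

lemma q_mid:
  assumes n: "n \<ge> 6" and i: "2 \<le> i" "i \<le> n - 5"
  shows "(qpoly n i :: 'a::comm_ring_1 mpoly) = Var 2 * Var (2 + i) + Var 1 * Var (3 + i) + Var 3 * Var (4 + i) * Var (4 + i) + Var (2 + i) * Var n"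
proof -
  let ?g = "\<lambda>j. (bentry n i j :: 'a mpoly) * Var (3 + j)"
  have "(qpoly n i :: 'a mpoly) = sum ?g {i-1,i,i+1,n-3}"
    unfolding qpoly_def
  proof (rule sum_sparse)
    show "{i-1,i,i+1,n-3} \<subseteq> {1..n - 3}" using n i by auto
    fix j assume j: "j \<in> {1..n-3}" "j \<notin> {i-1,i,i+1,n-3}"
    have "(bentry n i j :: 'a mpoly) = 0" by (rule bentry_other[OF n]) (use j i in auto)
    then show "?g j = 0" by simp
  qed simp
  also have "\<dots> = ?g (i-1) + ?g i + ?g (i+1) + ?g (n-3)"
  proof -
    have "i - 1 \<noteq> i" "i - 1 \<noteq> i + 1" "i - 1 \<noteq> n - 3" "i \<noteq> i + 1" "i \<noteq> n - 3" "i + 1 \<noteq> n - 3" using n i by auto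
    then show ?thesis by (simp add: add.assoc)
  qed
  also have "(bentry n i (i-1) :: 'a mpoly) = Var 2"
  proof -
    have "(bentry n (i - 1 + 1) (i-1) :: 'a mpoly) = Var 2" by (rule bentry_sub[OF n]) (use n i in auto)
    then show ?thesis using i by simp
  qed
  also have "(bentry n i i :: 'a mpoly) = Var 1" by (rule bentry_diag) (use n i in auto)
  also have "(bentry n i (i+1) :: 'a mpoly) = Var 3 * Var (3 + (i + 1))" by (rule bentry_super[OF n]) (use n i in auto)
  also have "(bentry n i (n-3) :: 'a mpoly) = Var (2 + i)" by (rule bentry_lastcol[OF n]) (use n i in auto)
  also have "3 + (n - 3) = n" using n by simp
  also have "3 + (i - 1) = 2 + i" using i by simp
  finally show ?thesis by (simp add: ac_simps)
qed

lemma q_pen: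
  assumes n: "n \<ge> 6"
  shows "(qpoly n (n-4) :: 'a::comm_ring_1 mpoly) = Var 2 * Var (n - 2) + Var 1 * Var (n - 1) + Var (n - 2) * Var n"
proof -
  let ?i = "n - 4"
  let ?g = "\<lambda>j. (bentry n ?i j :: 'a mpoly) * Var (3 + j)"
  have "(qpoly n ?i :: 'a mpoly) = sum ?g {n-5,n-4,n-3}"
    unfolding qpoly_def
  proof (rule sum_sparse)
    show "{n-5,n-4,n-3} \<subseteq> {1..n - 3}" using n by auto
    fix j assume j: "j \<in> {1..n-3}" "j \<notin> {n-5,n-4,n-3}"
    have "(bentry n ?i j :: 'a mpoly) = 0" by (rule bentry_other[OF n]) (use j n in auto)
    then show "?g j = 0" by simp
  qed simp
  also have "\<dots> = ?g (n-5) + ?g (n-4) + ?g (n-3)"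
  proof -
    have "n - 5 \<noteq> n - 4" "n - 5 \<noteq> n - 3" "n - 4 \<noteq> n - 3" using n by auto
    then show ?thesis by (simp add: add.assoc)
  qed
  also have "(bentry n ?i (n-5) :: 'a mpoly) = Var 2"
  proof -
    have "(bentry n (n - 5 + 1) (n-5) :: 'a mpoly) = Var 2" by (rule bentry_sub[OF n]) (use n in auto)
    moreover have "n - 5 + 1 = n - 4" using n by simp
    ultimately show ?thesis by simp
  qed
  also have "(bentry n ?i ?i :: 'a mpoly) = Var 1" by (rule bentry_diag) (use n in auto)
  also have "(bentry n ?i (n-3) :: 'a mpoly) = Var (2 + (n - 4))" by (rule bentry_lastcol[OF n]) (use n in auto)
  also have "3 + (n - 3) = n" using n by simp
  also have "3 + (n - 5) = n - 2" using n by simp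
  also have "3 + (n - 4) = n - 1" using n by simp
  also have "2 + (n - 4) = n - 2" using n by simp
  finally show ?thesis by (simp add: ac_simps)
qed

lemma q_last:
  assumes n: "n \<ge> 6"
  shows "(qpoly n (n-3) :: 'a::comm_ring_1 mpoly) = Var 2 * Var (n - 1) + Var 3 * Var n"
proof -
  let ?i = "n - 3"
  let ?g = "\<lambda>j. (bentry n ?i j :: 'a mpoly) * Var (3 + j)"
  have "(qpoly n ?i :: 'a mpoly) = sum ?g {n-4,n-3}"
    unfolding qpoly_def
  proof (rule sum_sparse)
    show "{n-4,n-3} \<subseteq> {1..n - 3}" using n by auto
    fix j assume j: "j \<in> {1..n-3}" "j \<notin> {n-4,n-3}"
    have "(bentry n ?i j :: 'a mpoly) = 0" by (rule bentry_other[OF n]) (use j n in auto)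
    then show "?g j = 0" by simp
  qed simp
  also have "\<dots> = ?g (n-4) + ?g (n-3)"
  proof -
    have "n - 4 \<noteq> n - 3" using n by auto
    then show ?thesis by simp
  qed
  also have "(bentry n ?i (n-4) :: 'a mpoly) = Var 2"
  proof -
    have "(bentry n (n - 4 + 1) (n-4) :: 'a mpoly) = Var 2" by (rule bentry_sub[OF n]) (use n in auto)
    moreover have "n - 4 + 1 = n - 3" using n by simp
    ultimately show ?thesis by simp
  qed
  also have "(bentry n ?i ?i :: 'a mpoly) = Var 3" by (rule bentry_last[OF n])
  also have "3 + (n - 3) = n" using n by simp
  also have "3 + (n - 4) = n - 1" using n by simp
  finally show ?thesis by (simp add: ac_simps)
qed


definition Gs :: "nat \<Rightarrow> 'a::comm_ring_1 mpoly set" where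
  "Gs n = {Dpoly n} \<union> {qpoly n i | i. 1 \<le> i \<and> i \<le> n - 3}"

lemma Gs_polyring: "n \<ge> 6 \<Longrightarrow> Gs n \<subseteq> polyring n"
  unfolding Gs_def using Dpoly_polyring qpoly_polyring by blast

lemma q_in_Gs: "1 \<le> i \<Longrightarrow> i \<le> n - 3 \<Longrightarrow> qpoly n i \<in> PI n (Gs n)"
  unfolding Gs_def by (rule PI_gen) blast

lemma D_in_Gs: "Dpoly n \<in> PI n (Gs n)"
  unfolding Gs_def by (rule PI_gen) blast

lemma Bv_q:
  assumes n: "n \<ge> 6" and i: "i < n - 3"
  shows "(Bmat n *\<^sub>v vec (n-3) (\<lambda>j. Var (j + 4))) $ i = (qpoly n (Suc i) :: 'a::comm_ring_1 mpoly)"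
proof -
  have dB: "dim_row (Bmat n :: 'a mpoly mat) = n - 3" "dim_col (Bmat n :: 'a mpoly mat) = n - 3" by (simp_all add: Bmat_def)
  let ?g = "\<lambda>j. (bentry n (Suc i) j :: 'a mpoly) * Var (3 + j)"
  have "(Bmat n *\<^sub>v vec (n-3) (\<lambda>j. Var (j + 4))) $ i = (\<Sum>j\<in>{0..<n-3}. ?g (Suc j))"
    using i dB by (simp add: scalar_prod_def Bmat_index add.commute)
  also have "\<dots> = sum ?g {Suc 0..<Suc (n-3)}" by (rule sum.shift_bounds_Suc_ivl[symmetric])
  also have "{Suc 0..<Suc (n-3)} = {1..n-3}" by auto
  finally show ?thesis unfolding qpoly_def .
qed

lemma adj_polyring:
  assumes n: "n \<ge> 6" and ij: "i < n - 3" "j < n - 3"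
  shows "adj_mat (Bmat n :: 'a::comm_ring_1 mpoly mat) $$ (i,j) \<in> polyring n"
proof -
  have dB: "dim_row (Bmat n :: 'a mpoly mat) = n - 3" "dim_col (Bmat n :: 'a mpoly mat) = n - 3" by (simp_all add: Bmat_def)
  have "adj_mat (Bmat n :: 'a mpoly mat) $$ (i,j) = cofactor (Bmat n) j i"
    unfolding adj_mat_def using ij dB by simp
  also have "\<dots> \<in> polyring n"
    unfolding cofactor_def
  proof (intro polyring_mult polyring_power polyring_uminus polyring_one det_polyring)
    show "mat_delete (Bmat n :: 'a mpoly mat) j i \<in> carrier_mat (n - 3 - 1) (n - 3 - 1)"
      using mat_delete_carrier[OF Bmat_carrier] by blast
    fix a b assume ab: "a < n - 3 - 1" "b < n - 3 - 1"
    show "mat_delete (Bmat n :: 'a mpoly mat) j i $$ (a, b) \<in> polyring n"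
      unfolding mat_delete_def using ab dB
      by (auto simp: Bmat_index intro!: bentry_polyring[OF n])
  qed
  finally show ?thesis .
qed

lemma cramer_step:
  assumes n: "n \<ge> 6" and k: "4 \<le> k" "k \<le> n"
  shows "det (Bmat n) * Var k \<in> PI n (Gs n :: 'a::comm_ring_1 mpoly set)"
proof -
  let ?N = "n - 3"
  let ?B = "Bmat n :: 'a mpoly mat"
  let ?v = "vec ?N (\<lambda>j. Var (j + 4)) :: 'a mpoly vec"
  have B: "?B \<in> carrier_mat ?N ?N" by (rule Bmat_carrier)
  have v: "?v \<in> carrier_vec ?N" by simp
  have A: "adj_mat ?B \<in> carrier_mat ?N ?N" using adj_mat(1)[OF B] .
  have "(adj_mat ?B * ?B) *\<^sub>v ?v = adj_mat ?B *\<^sub>v (?B *\<^sub>v ?v)"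
    using A B v by simp
  moreover have "adj_mat ?B * ?B = det ?B \<cdot>\<^sub>m 1\<^sub>m ?N" using adj_mat(3)[OF B] .
  ultimately have eq: "(det ?B \<cdot>\<^sub>m 1\<^sub>m ?N) *\<^sub>v ?v = adj_mat ?B *\<^sub>v (?B *\<^sub>v ?v)" by simp
  let ?j = "k - 4"
  have j: "?j < ?N" using k by simp
  have "((det ?B \<cdot>\<^sub>m 1\<^sub>m ?N) *\<^sub>v ?v) $ ?j = det ?B * Var k"
  proof -
    have "((det ?B \<cdot>\<^sub>m 1\<^sub>m ?N) *\<^sub>v ?v) $ ?j = (\<Sum>i\<in>{0..<?N}. (if ?j = i then det ?B else 0) * Var (i + 4))"
      using j by (simp add: scalar_prod_def; intro sum.cong; auto)
    also have "\<dots> = (\<Sum>i\<in>{0..<?N}. if ?j = i then det ?B * Var (i + 4) else 0)"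
      by (rule sum.cong) auto
    also have "\<dots> = det ?B * Var (?j + 4)" using j by simp
    finally show ?thesis using k by simp
  qed
  moreover have "(adj_mat ?B *\<^sub>v (?B *\<^sub>v ?v)) $ ?j = (\<Sum>i\<in>{0..<?N}. adj_mat ?B $$ (?j, i) * qpoly n (Suc i))"
  proof -
    have w: "dim_vec (?B *\<^sub>v ?v) = ?N" using B by simp
    have "(adj_mat ?B *\<^sub>v (?B *\<^sub>v ?v)) $ ?j = row (adj_mat ?B) ?j \<bullet> (?B *\<^sub>v ?v)"
      by (rule index_mult_mat_vec) (use A j in simp)
    also have "\<dots> = (\<Sum>i\<in>{0..<?N}. row (adj_mat ?B) ?j $ i * (?B *\<^sub>v ?v) $ i)"
      by (simp only: scalar_prod_def w)
    also have "\<dots> = (\<Sum>i\<in>{0..<?N}. adj_mat ?B $$ (?j, i) * qpoly n (Suc i))"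
      by (rule sum.cong) (use A j in \<open>auto simp: Bv_q[OF n]\<close>)
    finally show ?thesis .
  qed
  moreover have "(\<Sum>i\<in>{0..<?N}. adj_mat ?B $$ (?j, i) * qpoly n (Suc i)) \<in> PI n (Gs n)"
    by (intro PI_sum PI_mult q_in_Gs adj_polyring[OF n j]) auto
  ultimately show ?thesis using eq by simp
qed


lemma RadI: "f \<in> polyring n \<Longrightarrow> f ^ k \<in> PI n S \<Longrightarrow> f \<in> Rad n S"
  unfolding radical_in_def by blast

lemma Rad_sq: "f \<in> polyring n \<Longrightarrow> f * f \<in> Rad n S \<Longrightarrow> f \<in> Rad n S"
  by (rule Rad_root[of f n 2]) (simp_all add: power2_eq_square)

lemma neg1sq: "(-1::'a::comm_ring_1) ^ n * (-1) ^ n = 1"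
  by (simp add: power_mult_distrib[symmetric])

lemma x2xk:
  assumes n: "n \<ge> 6" and k: "4 \<le> k" "k \<le> n"
  shows "Var 2 * Var k \<in> Rad n (Gs n :: 'a::comm_ring_1 mpoly set)"
proof -
  have vk: "(Var k :: 'a mpoly) \<in> polyring n" using k by simp
  have c: "det (Bmat n) * Var k \<in> PI n (Gs n :: 'a mpoly set)" by (rule cramer_step[OF n k])
  have d: "Dpoly n * Var k \<in> PI n (Gs n :: 'a mpoly set)" using vk by (intro PI_mult' D_in_Gs)
  have e: "(Var 2 ^ (n - 3) * Var k :: 'a mpoly) = (-1) ^ n * (det (Bmat n) * Var k - Dpoly n * Var k)"
  proof -
    have "det (Bmat n) * Var k - Dpoly n * Var k = (-1) ^ n * (Var 2 ^ (n - 3) * (Var k :: 'a mpoly))"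
      unfolding Dpoly_def by (simp add: algebra_simps)
    then have "(-1) ^ n * (det (Bmat n) * Var k - Dpoly n * Var k) = ((-1) ^ n * (-1) ^ n) * (Var 2 ^ (n - 3) * (Var k :: 'a mpoly))"
      by (simp add: mult.assoc)
    then show ?thesis by (simp add: neg1sq)
  qed
  have x: "(Var 2 ^ (n - 3) * Var k :: 'a mpoly) \<in> PI n (Gs n)"
    unfolding e by (rule PI_mult[OF PI_minus[OF c d]]) simp
  have "(Var 2 * Var k :: 'a mpoly) ^ (n - 3) = (Var 2 ^ (n - 3) * Var k) * Var k ^ (n - 4)"
  proof -
    have "n - 3 = Suc (n - 4)" using n by simp
    then show ?thesis by (simp add: power_mult_distrib mult_ac)
  qed
  then have "(Var 2 * Var k :: 'a mpoly) ^ (n - 3) \<in> PI n (Gs n)" using x vk by simp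
  then show ?thesis using vk n by (intro RadI) auto
qed

lemma lift:
  fixes f :: "'a::comm_ring_1 mpoly"
  assumes S: "S \<subseteq> polyring n" and f: "f \<in> polyring n" and fm: "f ^ m \<in> PI n (S \<union> H)"
    and fh: "\<And>h. h \<in> H \<Longrightarrow> f * h \<in> Rad n S"
  shows "f \<in> Rad n S"
proof -
  obtain a b where ab: "a \<in> PI n S" "b \<in> PI n H" "f ^ m = a + b" using PI_union_split[OF fm] by blast
  have "PI n H \<subseteq> {b. f * b \<in> Rad n S}"
  proof (rule PI_least)
    show "H \<subseteq> {b. f * b \<in> Rad n S}" using fh by blast
  next
    fix p q assume "p \<in> {b. f * b \<in> Rad n S}" "q \<in> {b. f * b \<in> Rad n S}"
    then show "p + q \<in> {b. f * b \<in> Rad n S}" by (simp add: distrib_left)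
  next
    show "0 \<in> {b. f * b \<in> Rad n S}" by simp
  next
    fix p and c :: "'a mpoly" assume "p \<in> {b. f * b \<in> Rad n S}" "c \<in> polyring n"
    then have "c * (f * p) \<in> Rad n S" by simp
    then show "c * p \<in> {b. f * b \<in> Rad n S}" by (simp add: mult_ac)
  qed
  then have fb: "f * b \<in> Rad n S" using ab by blast
  have fa: "f * a \<in> Rad n S" using ab(1) f S by (intro Rad_PI) auto
  have "f ^ Suc m = f * a + f * b" using ab by (simp add: distrib_left)
  then have "f ^ Suc m \<in> Rad n S" using fa fb by simp
  then show ?thesis by (rule Rad_root[OF f])
qed


definition G2 :: "nat \<Rightarrow> 'a::comm_ring_1 mpoly set" where
  "G2 n = Gs n \<union> {Var 2}"

lemma G2_polyring: "n \<ge> 6 \<Longrightarrow> G2 n \<subseteq> polyring n"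
  unfolding G2_def using Gs_polyring by auto

lemma x2r: "n \<ge> 6 \<Longrightarrow> r \<in> polyring n \<Longrightarrow> Var 2 * r \<in> Rad n (G2 n)"
proof -
  assume n: "n \<ge> 6" and r: "r \<in> polyring n"
  have "Var 2 \<in> PI n (G2 n)" by (rule PI_gen) (simp add: G2_def)
  then have "Var 2 * r \<in> PI n (G2 n)" using r by (rule PI_mult')
  then show ?thesis by (rule Rad_PI[OF G2_polyring[OF n]])
qed

lemma q2: "n \<ge> 6 \<Longrightarrow> 1 \<le> i \<Longrightarrow> i \<le> n - 3 \<Longrightarrow> qpoly n i \<in> Rad n (G2 n)"
  by (rule Rad_PI[OF G2_polyring]) (auto simp: G2_def intro: subsetD[OF ideal_gen_mono q_in_Gs])

lemma kill2_D:
  assumes n: "n \<ge> 6"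
  shows "kill {2} (Dpoly n :: 'a::comm_ring_1 mpoly) = Var 1 ^ (n - 4) * Var 3"
proof -
  have p: "n - 3 > 0" using n by simp
  then show ?thesis using det_KB_upper[OF n, of "{2}", where 'a='a]
    by (simp add: kill_Dpoly kill_Var zero_power[OF p])
qed

lemma kill4_D:
  assumes n: "n \<ge> 6"
  shows "kill {4..n} (Dpoly n :: 'a::comm_ring_1 mpoly) = Var 1 ^ (n - 4) * Var 3"
  using det_KB_big[OF n, of "{4..n}", where 'a='a] n
  by (simp add: kill_Dpoly kill_Var neg1_pow)

lemma x1x3_pow_PI:
  assumes n: "n \<ge> 6" and Z: "Z = {2} \<or> Z = {4..n}"
  shows "(Var 1 * Var 3 :: 'a::comm_ring_1 mpoly) ^ (n - 4) \<in> PI n (Gs n \<union> Var ` (Z \<inter> {1..n}))"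
proof -
  have kD: "kill Z (Dpoly n :: 'a mpoly) = Var 1 ^ (n - 4) * Var 3"
    using Z kill2_D[OF n] kill4_D[OF n] by auto
  have "Dpoly n - kill Z (Dpoly n) \<in> PI n (Var ` (Z \<inter> {1..n}) :: 'a mpoly set)"
    by (rule kill_diff_PI[OF Dpoly_polyring[OF n]])
  then have a: "Dpoly n - kill Z (Dpoly n) \<in> PI n (Gs n \<union> Var ` (Z \<inter> {1..n}) :: 'a mpoly set)"
    by (rule subsetD[OF ideal_gen_mono, rotated]) auto
  have b: "Dpoly n \<in> PI n (Gs n \<union> Var ` (Z \<inter> {1..n}) :: 'a mpoly set)"
    by (rule PI_gen) (auto simp: Gs_def)
  have c: "(Var 1 ^ (n - 4) * Var 3 :: 'a mpoly) \<in> PI n (Gs n \<union> Var ` (Z \<inter> {1..n}))"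
    using PI_minus[OF b a] kD by simp
  have "(Var 1 * Var 3 :: 'a mpoly) ^ (n - 4) = (Var 1 ^ (n - 4) * Var 3) * Var 3 ^ (n - 5)"
  proof -
    have "n - 4 = Suc (n - 5)" using n by simp
    then show ?thesis by (simp add: power_mult_distrib mult_ac)
  qed
  then show ?thesis using c n by simp
qed


context
  fixes n :: nat
  assumes n: "n \<ge> 6"
begin

abbreviation "R2 \<equiv> Rad n (G2 n)"

lemma id_A: "(a::'b::comm_ring_1) * (a * b) = a * (a * b + c * d * d) - (a * c) * (d * d)"
  by (simp add: algebra_simps)

lemma id_B: "(b + c + d + e) - b = (c + d + e :: 'b::comm_ring_1)"
  by (simp add: algebra_simps)

lemma id_B3: "(b + c + e) - b = (c + e :: 'b::comm_ring_1)"
  by (simp add: algebra_simps)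

lemma id_C: "a * (a * c) = a * (a * c + t * d * d + e * f) - (a * t) * (d * d) - (a * e) * (f :: 'b::comm_ring_1)"
  by (simp add: algebra_simps)

lemma id_C3: "a * (a * c) = a * (a * c + e * f) - (a * e) * (f :: 'b::comm_ring_1)"
  by (simp add: algebra_simps)

lemma id_sq: "(a * c) * (a * c) = (a * (a * c)) * (c :: 'b::comm_ring_1)"
  by (simp add: algebra_simps)

lemma id_V: "(a * c + t * d * d + e * f) - a * c = (t * d * d + e * f :: 'b::comm_ring_1)"
  by (simp add: algebra_simps)

lemma id_D: "(t * d) * (t * d) = t * (t * d * d + e * f) - (t * f) * (e :: 'b::comm_ring_1)"
  by (simp add: algebra_simps)

lemma id_E: "e * f = (t * d * d + e * f) - (t * d) * (d :: 'b::comm_ring_1)"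
  by (simp add: algebra_simps)

lemma id_E3: "e * f = (a * c + e * f) - (a * c :: 'b::comm_ring_1)"
  by (simp add: algebra_simps)

lemma Rad_subst: "y \<in> Rad m S \<Longrightarrow> x = y \<Longrightarrow> x \<in> Rad m S"
  by simp

lemma pv: "1 \<le> k \<Longrightarrow> k \<le> n \<Longrightarrow> Var k \<in> polyring n"
  by simp

lemma x1x3_R2: "(Var 1 * Var 3 :: 'a::comm_ring_1 mpoly) \<in> R2"
proof -
  have a: "(Var 1 * Var 3 :: 'a mpoly) ^ (n - 4) \<in> PI n (Gs n \<union> Var ` ({2} \<inter> {1..n}))"
    by (rule x1x3_pow_PI[OF n]) simp
  have b: "PI n (Gs n \<union> Var ` ({2} \<inter> {1..n})) \<subseteq> PI n (G2 n :: 'a mpoly set)"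
    by (rule ideal_gen_mono) (auto simp: G2_def)
  have p: "(Var 1 * Var 3 :: 'a mpoly) \<in> polyring n" using n by simp
  show ?thesis by (rule RadI[OF p]) (rule subsetD[OF b a])
qed

lemma x3xn_R2: "(Var 3 * Var n :: 'a::comm_ring_1 mpoly) \<in> R2"
proof -
  have "(qpoly n (n-3) :: 'a mpoly) \<in> R2" using n by (intro q2[OF n]) auto
  then have a: "(Var 2 * Var (n - 1) + Var 3 * Var n :: 'a mpoly) \<in> R2" by (simp add: q_last[OF n])
  have b: "(Var 2 * Var (n - 1) :: 'a mpoly) \<in> R2" using n by (intro x2r[OF n]) auto
  have "(Var 3 * Var n :: 'a mpoly) = (Var 2 * Var (n - 1) + Var 3 * Var n) - Var 2 * Var (n - 1)" by simp
  then show ?thesis using Rad_minus[OF a b] by simp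
qed

lemma base_R2: "(Var 1 * Var 4 :: 'a::comm_ring_1 mpoly) \<in> R2 \<and> (Var 3 * Var 5 :: 'a mpoly) \<in> R2"
proof -
  have a: "(Var 1 * Var 4 + Var 3 * Var 5 * Var 5 + Var 2 * Var n :: 'a mpoly) \<in> R2"
    unfolding q_first[OF n, symmetric] by (rule q2[OF n]) (use n in auto)
  have b: "(Var 2 * Var n :: 'a mpoly) \<in> R2" using n by (intro x2r[OF n]) auto
  have eq4: "(Var 1 * Var 4 + Var 3 * Var 5 * Var 5 :: 'a mpoly) = (Var 1 * Var 4 + Var 3 * Var 5 * Var 5 + Var 2 * Var n) - Var 2 * Var n" by simp
  have W: "(Var 1 * Var 4 + Var 3 * Var 5 * Var 5 :: 'a mpoly) \<in> R2"
    by (rule Rad_subst[OF Rad_minus[OF a b]]) (rule eq4)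
  have p1: "(Var 1 :: 'a mpoly) \<in> polyring n" "(Var 4 :: 'a mpoly) \<in> polyring n" "(Var 3 :: 'a mpoly) \<in> polyring n" "(Var 5 :: 'a mpoly) \<in> polyring n"
    using n by auto
  have c: "(Var 1 * (Var 1 * Var 4) :: 'a mpoly) \<in> R2"
    by (rule Rad_subst[OF Rad_minus[OF Rad_mult[OF W p1(1)] Rad_mult'[OF x1x3_R2 polyring_mult[OF p1(4) p1(4)]]]]) (rule id_A)
  have eq1: "(Var 1 * Var 4) * (Var 1 * Var 4) = (Var 1 * (Var 1 * Var 4)) * (Var 4 :: 'a mpoly)" by (simp add: mult_ac)
  have "(Var 1 * Var 4) * (Var 1 * Var 4) \<in> (R2 :: 'a mpoly set)" by (rule Rad_subst[OF Rad_mult'[OF c p1(2)]]) (rule eq1)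
  then have d: "(Var 1 * Var 4 :: 'a mpoly) \<in> R2" by (rule Rad_sq[OF polyring_mult[OF p1(1) p1(2)]])
  have eq3: "(Var 3 * Var 5 * Var 5 :: 'a mpoly) = (Var 1 * Var 4 + Var 3 * Var 5 * Var 5) - Var 1 * Var 4" by simp
  have e: "(Var 3 * Var 5 * Var 5 :: 'a mpoly) \<in> R2"
    by (rule Rad_subst[OF Rad_minus[OF W d]]) (rule eq3)
  have eq2: "(Var 3 * Var 5) * (Var 3 * Var 5) = Var 3 * (Var 3 * Var 5 * Var 5 :: 'a mpoly)" by (simp add: mult_ac)
  have "(Var 3 * Var 5) * (Var 3 * Var 5) \<in> (R2 :: 'a mpoly set)" by (rule Rad_subst[OF Rad_mult[OF e p1(3)]]) (rule eq2)
  then have f: "(Var 3 * Var 5 :: 'a mpoly) \<in> R2" by (rule Rad_sq[OF polyring_mult[OF p1(3) p1(4)]])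
  show ?thesis using d f by (rule conjI)
qed

lemma W_mid:
  assumes i: "2 \<le> i" "i \<le> n - 5"
  shows "(Var 1 * Var (3 + i) + Var 3 * Var (4 + i) * Var (4 + i) + Var (2 + i) * Var n :: 'a::comm_ring_1 mpoly) \<in> R2"
proof -
  have a: "(Var 2 * Var (2 + i) + Var 1 * Var (3 + i) + Var 3 * Var (4 + i) * Var (4 + i) + Var (2 + i) * Var n :: 'a mpoly) \<in> R2"
    unfolding q_mid[OF n i, symmetric] by (rule q2[OF n]) (use i n in auto)
  have b: "(Var 2 * Var (2 + i) :: 'a mpoly) \<in> R2" by (rule x2r[OF n]) (use i n in auto)
  show ?thesis by (rule Rad_subst[OF Rad_minus[OF a b]]) (rule id_B[symmetric])
qed

lemma W_pen: "(Var 1 * Var (n - 1) + Var (n - 2) * Var n :: 'a::comm_ring_1 mpoly) \<in> R2"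
proof -
  have a: "(Var 2 * Var (n - 2) + Var 1 * Var (n - 1) + Var (n - 2) * Var n :: 'a mpoly) \<in> R2"
    unfolding q_pen[OF n, symmetric] by (rule q2[OF n]) (use n in auto)
  have b: "(Var 2 * Var (n - 2) :: 'a mpoly) \<in> R2" by (rule x2r[OF n]) (use n in auto)
  show ?thesis by (rule Rad_subst[OF Rad_minus[OF a b]]) (rule id_B3[symmetric])
qed

lemma A_step:
  assumes i: "2 \<le> i" "i \<le> n - 5" and IH: "(Var 1 * Var (2 + i) :: 'a::comm_ring_1 mpoly) \<in> R2"
  shows "(Var 1 * Var (3 + i) :: 'a mpoly) \<in> R2"
proof -
  have p: "(Var 1 :: 'a mpoly) \<in> polyring n" "(Var (3 + i) :: 'a mpoly) \<in> polyring n" "(Var (4 + i) :: 'a mpoly) \<in> polyring n" "(Var n :: 'a mpoly) \<in> polyring n"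
    using i n by auto
  have c: "(Var 1 * (Var 1 * Var (3 + i)) :: 'a mpoly) \<in> R2"
    by (rule Rad_subst[OF Rad_minus[OF Rad_minus[OF Rad_mult[OF W_mid[OF i] p(1)] Rad_mult'[OF x1x3_R2 polyring_mult[OF p(3) p(3)]]] Rad_mult'[OF IH p(4)]]]) (rule id_C)
  have "(Var 1 * Var (3 + i)) * (Var 1 * Var (3 + i)) \<in> (R2 :: 'a mpoly set)"
    by (rule Rad_subst[OF Rad_mult'[OF c p(2)]]) (rule id_sq)
  then show ?thesis by (rule Rad_sq[OF polyring_mult[OF p(1) p(2)]])
qed

lemma A_pen:
  assumes IH: "(Var 1 * Var (n - 2) :: 'a::comm_ring_1 mpoly) \<in> R2"
  shows "(Var 1 * Var (n - 1) :: 'a mpoly) \<in> R2"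
proof -
  have p: "(Var 1 :: 'a mpoly) \<in> polyring n" "(Var (n - 1) :: 'a mpoly) \<in> polyring n" "(Var n :: 'a mpoly) \<in> polyring n"
    using n by auto
  have c: "(Var 1 * (Var 1 * Var (n - 1)) :: 'a mpoly) \<in> R2"
    by (rule Rad_subst[OF Rad_minus[OF Rad_mult[OF W_pen p(1)] Rad_mult'[OF IH p(3)]]]) (rule id_C3)
  have "(Var 1 * Var (n - 1)) * (Var 1 * Var (n - 1)) \<in> (R2 :: 'a mpoly set)"
    by (rule Rad_subst[OF Rad_mult'[OF c p(2)]]) (rule id_sq)
  then show ?thesis by (rule Rad_sq[OF polyring_mult[OF p(1) p(2)]])
qed

lemma A_all: "1 \<le> i \<Longrightarrow> i \<le> n - 4 \<Longrightarrow> (Var 1 * Var (3 + i) :: 'a::comm_ring_1 mpoly) \<in> R2"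
proof (induction i)
  case 0
  then show ?case by simp
next
  case (Suc i)
  show ?case
  proof (cases "i = 0")
    case True
    then show ?thesis using base_R2[where 'a='a] by simp
  next
    case False
    then have IH: "(Var 1 * Var (3 + i) :: 'a mpoly) \<in> R2" using Suc by simp
    show ?thesis
    proof (cases "Suc i \<le> n - 5")
      case True
      have e: "2 + Suc i = 3 + i" by simp
      have IH2: "(Var 1 * Var (2 + Suc i) :: 'a mpoly) \<in> R2" unfolding e by (rule IH)
      show ?thesis by (rule A_step[OF _ _ IH2]) (use True False in auto)
    next
      case F2: False
      then have e: "3 + i = n - 2" "3 + Suc i = n - 1" using Suc.prems by auto
      show ?thesis unfolding e(2) by (rule A_pen) (use IH e(1) in simp)
    qed
  qed
qed

lemma CE_mid:
  assumes i: "2 \<le> i" "i \<le> n - 5"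
  shows "(Var 3 * Var (4 + i) :: 'a::comm_ring_1 mpoly) \<in> R2 \<and> (Var (2 + i) * Var n :: 'a mpoly) \<in> R2"
proof -
  have p: "(Var 3 :: 'a mpoly) \<in> polyring n" "(Var (2 + i) :: 'a mpoly) \<in> polyring n" "(Var (4 + i) :: 'a mpoly) \<in> polyring n"
    using i n by auto
  have A: "(Var 1 * Var (3 + i) :: 'a mpoly) \<in> R2" by (rule A_all) (use i in auto)
  have V: "(Var 3 * Var (4 + i) * Var (4 + i) + Var (2 + i) * Var n :: 'a mpoly) \<in> R2"
    by (rule Rad_subst[OF Rad_minus[OF W_mid[OF i] A]]) (rule id_V[symmetric])
  have "(Var 3 * Var (4 + i)) * (Var 3 * Var (4 + i)) \<in> (R2 :: 'a mpoly set)"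
    by (rule Rad_subst[OF Rad_minus[OF Rad_mult[OF V p(1)] Rad_mult'[OF x3xn_R2 p(2)]]]) (rule id_D)
  then have C: "(Var 3 * Var (4 + i) :: 'a mpoly) \<in> R2" by (rule Rad_sq[OF polyring_mult[OF p(1) p(3)]])
  have E: "(Var (2 + i) * Var n :: 'a mpoly) \<in> R2"
    by (rule Rad_subst[OF Rad_minus[OF V Rad_mult'[OF C p(3)]]]) (rule id_E)
  show ?thesis using C E by (rule conjI)
qed

lemma E_pen: "(Var (n - 2) * Var n :: 'a::comm_ring_1 mpoly) \<in> R2"
proof -
  have e: "3 + (n - 4) = n - 1" using n by simp
  have "(Var 1 * Var (3 + (n - 4)) :: 'a mpoly) \<in> R2" by (rule A_all) (use n in auto)
  then have A: "(Var 1 * Var (n - 1) :: 'a mpoly) \<in> R2" unfolding e .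
  show ?thesis by (rule Rad_subst[OF Rad_minus[OF W_pen A]]) (rule id_E3)
qed

end


lemma gpPI: "gp n a b \<Longrightarrow> Var a * Var b \<in> PI n (In_gens n)"
  by (rule PI_gen, rule gp_gen)

lemma q_In:
  assumes n: "n \<ge> 6" and i: "1 \<le> i" "i \<le> n - 3"
  shows "(qpoly n i :: 'a::comm_ring_1 mpoly) \<in> PI n (In_gens n)"
proof -
  consider "i = 1" | "2 \<le> i" "i \<le> n - 5" | "i = n - 4" | "i = n - 3" using i n by linarith
  then show ?thesis
  proof cases
    case 1
    have a: "(Var 1 * Var 4 :: 'a mpoly) \<in> PI n (In_gens n)" by (rule gpPI) (insert n, unfold gp_def, arith)
    have g: "gp n 3 5" using n unfolding gp_def by arith
    have p: "(Var 5 :: 'a mpoly) \<in> polyring n" using n by simp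
    have b: "(Var 3 * Var 5 * Var 5 :: 'a mpoly) \<in> PI n (In_gens n)"
      by (rule PI_mult'[OF gpPI[OF g] p])
    have c: "(Var 2 * Var n :: 'a mpoly) \<in> PI n (In_gens n)" by (rule gpPI) (insert n, unfold gp_def, arith)
    show ?thesis unfolding 1 q_first[OF n] by (rule PI_add[OF PI_add[OF a b] c])
  next
    case 2
    have a: "(Var 2 * Var (2 + i) :: 'a mpoly) \<in> PI n (In_gens n)" by (rule gpPI) (insert n 2, unfold gp_def, arith)
    have b: "(Var 1 * Var (3 + i) :: 'a mpoly) \<in> PI n (In_gens n)" by (rule gpPI) (insert n 2, unfold gp_def, arith)
    have g: "gp n 3 (4 + i)" using n 2 unfolding gp_def by arith
    have p: "(Var (4 + i) :: 'a mpoly) \<in> polyring n" using n 2 by simp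
    have c: "(Var 3 * Var (4 + i) * Var (4 + i) :: 'a mpoly) \<in> PI n (In_gens n)"
      by (rule PI_mult'[OF gpPI[OF g] p])
    have d: "(Var (2 + i) * Var n :: 'a mpoly) \<in> PI n (In_gens n)" by (rule gpPI) (insert n 2, unfold gp_def, arith)
    show ?thesis unfolding q_mid[OF n 2] by (rule PI_add[OF PI_add[OF PI_add[OF a b] c] d])
  next
    case 3
    have a: "(Var 2 * Var (n - 2) :: 'a mpoly) \<in> PI n (In_gens n)" by (rule gpPI) (insert n, unfold gp_def, arith)
    have b: "(Var 1 * Var (n - 1) :: 'a mpoly) \<in> PI n (In_gens n)" by (rule gpPI) (insert n, unfold gp_def, arith)
    have c: "(Var (n - 2) * Var n :: 'a mpoly) \<in> PI n (In_gens n)" by (rule gpPI) (insert n, unfold gp_def, arith)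
    show ?thesis unfolding 3 q_pen[OF n] by (rule PI_add[OF PI_add[OF a b] c])
  next
    case 4
    have a: "(Var 2 * Var (n - 1) :: 'a mpoly) \<in> PI n (In_gens n)" by (rule gpPI) (insert n, unfold gp_def, arith)
    have b: "(Var 3 * Var n :: 'a mpoly) \<in> PI n (In_gens n)" by (rule gpPI) (insert n, unfold gp_def, arith)
    show ?thesis unfolding 4 q_last[OF n] by (rule PI_add[OF a b])
  qed
qed

lemma Gs_In: "n \<ge> 6 \<Longrightarrow> PI n (Gs n :: 'a::comm_ring_1 mpoly set) \<subseteq> PI n (In_gens n)"
proof (rule PI_trans)
  assume n: "n \<ge> 6"
  show "Gs n \<subseteq> PI n (In_gens n :: 'a mpoly set)"
  proof
    fix x :: "'a mpoly" assume "x \<in> Gs n"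
    then have "x = Dpoly n \<or> (\<exists>i. x = qpoly n i \<and> 1 \<le> i \<and> i \<le> n - 3)" unfolding Gs_def by blast
    then show "x \<in> PI n (In_gens n)"
    proof
      assume "x = Dpoly n" then show ?thesis using Dpoly_In[OF n, where 'a='a] by simp
    next
      assume "\<exists>i. x = qpoly n i \<and> 1 \<le> i \<and> i \<le> n - 3"
      then obtain i where "x = qpoly n i" "1 \<le> i" "i \<le> n - 3" by blast
      then show ?thesis using q_In[OF n, of i, where 'a='a] by simp
    qed
  qed
qed

lemma gens_R2:
  assumes n: "n \<ge> 6" and g: "gp n a b" and a2: "a \<noteq> 2"
  shows "(Var a * Var b :: 'a::comm_ring_1 mpoly) \<in> Rad n (G2 n)"
proof -
  have "(a = 1 \<and> 3 \<le> b \<and> b \<le> n - 1) \<or> (a = 3 \<and> 5 \<le> b \<and> b \<le> n) \<or> (4 \<le> a \<and> a \<le> n - 2 \<and> b = n)"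
    using g a2 unfolding gp_def by blast
  then show ?thesis
  proof (elim disjE conjE)
    assume ab: "a = 1" "3 \<le> b" "b \<le> n - 1"
    show ?thesis
    proof (cases "b = 3")
      case True
      have "(Var 1 * Var 3 :: 'a mpoly) \<in> Rad n (G2 n)" by (rule x1x3_R2[OF n])
      then show ?thesis using ab True by simp
    next
      case False
      have "(Var 1 * Var (3 + (b - 3)) :: 'a mpoly) \<in> Rad n (G2 n)" by (rule A_all[OF n]) (use ab False in auto)
      moreover have "3 + (b - 3) = b" using ab by simp
      ultimately show ?thesis using ab by simp
    qed
  next
    assume ab: "a = 3" "5 \<le> b" "b \<le> n"
    show ?thesis
    proof (cases "b = 5")
      case True
      have "(Var 3 * Var 5 :: 'a mpoly) \<in> Rad n (G2 n)" using base_R2[OF n, where 'a='a] by (rule conjunct2)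
      then show ?thesis using ab True by simp
    next
      case F5: False
      show ?thesis
      proof (cases "b = n")
        case True
        have "(Var 3 * Var n :: 'a mpoly) \<in> Rad n (G2 n)" by (rule x3xn_R2[OF n])
        then show ?thesis using ab True by simp
      next
        case False
        have i: "2 \<le> b - 4" "b - 4 \<le> n - 5" using ab F5 False by auto
        have "(Var 3 * Var (4 + (b - 4)) :: 'a mpoly) \<in> Rad n (G2 n)" using CE_mid[OF n i, where 'a='a] by (rule conjunct1)
        moreover have "4 + (b - 4) = b" using ab by simp
        ultimately show ?thesis using ab by simp
      qed
    qed
  next
    assume ab: "4 \<le> a" "a \<le> n - 2" "b = n"
    show ?thesis
    proof (cases "a = n - 2")
      case True
      have "(Var (n - 2) * Var n :: 'a mpoly) \<in> Rad n (G2 n)" by (rule E_pen[OF n])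
      then show ?thesis using ab True by simp
    next
      case False
      have i: "2 \<le> a - 2" "a - 2 \<le> n - 5" using ab False by auto
      have "(Var (2 + (a - 2)) * Var n :: 'a mpoly) \<in> Rad n (G2 n)" using CE_mid[OF n i, where 'a='a] by (rule conjunct2)
      moreover have "2 + (a - 2) = a" using ab by simp
      ultimately show ?thesis using ab by simp
    qed
  qed
qed

lemma gens_Rad_b4:
  assumes n: "n \<ge> 6" and g: "gp n a b" and a2: "a \<noteq> 2" and b4: "4 \<le> b"
  shows "(Var a * Var b :: 'a::comm_ring_1 mpoly) \<in> Rad n (Gs n)"
proof -
  have r: "1 \<le> a \<and> a < b \<and> b \<le> n" using gp_range[OF n g] .
  have f: "(Var a * Var b :: 'a mpoly) \<in> polyring n" using r by simp
  obtain m where m: "(Var a * Var b :: 'a mpoly) ^ m \<in> PI n (Gs n \<union> {Var 2})"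
    using gens_R2[OF n g a2, where 'a='a] unfolding radical_in_def G2_def by blast
  show ?thesis
  proof (rule lift[OF Gs_polyring[OF n] f m])
    fix h assume "h \<in> {Var 2 :: 'a mpoly}"
    then have h: "h = Var 2" by simp
    have "Var a * (Var 2 * Var b) \<in> Rad n (Gs n :: 'a mpoly set)"
      by (rule Rad_mult[OF x2xk[OF n b4]]) (use r in simp_all)
    then show "Var a * Var b * h \<in> Rad n (Gs n)" unfolding h by (simp add: mult_ac)
  qed
qed

lemma gens_Rad:
  assumes n: "n \<ge> 6" and g: "gp n a b"
  shows "(Var a * Var b :: 'a::comm_ring_1 mpoly) \<in> Rad n (Gs n)"
proof (cases "a = 2")
  case True
  then show ?thesis using g x2xk[OF n, where 'a='a] unfolding gp_def by auto
next
  case a2: False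
  show ?thesis
  proof (cases "4 \<le> b")
    case True
    then show ?thesis by (rule gens_Rad_b4[OF n g a2])
  next
    case False
    then have ab: "a = 1" "b = 3" using g a2 n unfolding gp_def by auto
    have f: "(Var 1 * Var 3 :: 'a mpoly) \<in> polyring n" using n by simp
    have m: "(Var 1 * Var 3 :: 'a mpoly) ^ (n - 4) \<in> PI n (Gs n \<union> Var ` ({4..n} \<inter> {1..n}))"
      by (rule x1x3_pow_PI[OF n]) simp
    have "(Var 1 * Var 3 :: 'a mpoly) \<in> Rad n (Gs n)"
    proof (rule lift[OF Gs_polyring[OF n] f m])
      fix h :: "'a mpoly" assume "h \<in> Var ` ({4..n} \<inter> {1..n})"
      then obtain k where k: "4 \<le> k" "k \<le> n" "h = Var k" by auto
      show "Var 1 * Var 3 * h \<in> Rad n (Gs n :: 'a mpoly set)"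
      proof (cases "k = n")
        case True
        have "Var 1 * (Var 3 * Var n) \<in> Rad n (Gs n :: 'a mpoly set)"
          by (rule Rad_mult[OF gens_Rad_b4[OF n]]) (use n in \<open>simp_all add: gp_def\<close>)
        then show ?thesis using True k by (simp add: mult_ac)
      next
        case False
        have "Var 3 * (Var 1 * Var k) \<in> Rad n (Gs n :: 'a mpoly set)"
          by (rule Rad_mult[OF gens_Rad_b4[OF n]]) (use n k False in \<open>simp_all add: gp_def\<close>)
        then show ?thesis using k by (simp add: mult_ac)
      qed
    qed
    then show ?thesis using ab by simp
  qed
qed

theorem proposition2p2:
  fixes n :: nat
  assumes "n \<ge> 6"
  shows "ideal_gen (polyring n :: 'a::field mpoly set) (In_gens n) =
         radical_in (polyring n)
           (ideal_gen (polyring n) ({Dpoly n} \<union> {qpoly n i | i. 1 \<le> i \<and> i \<le> n - 3}))"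
proof -
  have n: "n \<ge> 6" by (rule assms)
  have G: "{Dpoly n} \<union> {qpoly n i | i. 1 \<le> i \<and> i \<le> n - 3} = (Gs n :: 'a mpoly set)" by (simp add: Gs_def)
  show ?thesis unfolding G
  proof
    show "PI n (In_gens n) \<subseteq> Rad n (Gs n :: 'a mpoly set)"
    proof (rule PI_least)
      show "In_gens n \<subseteq> Rad n (Gs n :: 'a mpoly set)"
      proof
        fix x :: "'a mpoly" assume "x \<in> In_gens n"
        then obtain a b where "x = Var a * Var b" "gp n a b" unfolding In_gens_eq by blast
        then show "x \<in> Rad n (Gs n)" using gens_Rad[OF n, of a b, where 'a='a] by simp
      qed
    next
      fix p q :: "'a mpoly" assume "p \<in> Rad n (Gs n)" "q \<in> Rad n (Gs n)"
      then show "p + q \<in> Rad n (Gs n)" by (rule Rad_add)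
    next
      show "(0 :: 'a mpoly) \<in> Rad n (Gs n)" by (rule Rad_zero)
    next
      fix p c :: "'a mpoly" assume "p \<in> Rad n (Gs n)" "c \<in> polyring n"
      then show "c * p \<in> Rad n (Gs n)" by (rule Rad_mult)
    qed
  next
    show "Rad n (Gs n :: 'a mpoly set) \<subseteq> PI n (In_gens n)"
    proof
      fix f assume "f \<in> Rad n (Gs n :: 'a mpoly set)"
      then obtain k where f: "f \<in> polyring n" "f ^ k \<in> PI n (Gs n)" unfolding radical_in_def by blast
      then have "f ^ k \<in> PI n (In_gens n)" using Gs_In[OF n] by blast
      then show "f \<in> PI n (In_gens n)" by (rule In_radical[OF n f(1)])
    qed
  qed
qed


end
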